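(* For any signature $\Sigma$, the quadruple consisting of the class of $\Sigma$-forest-like alphabets, the disjoint sum operation $\mathbin{+\!\!+}$, the maps $r_A$, and the alphabet $A_p(\Sigma)$ is a polynomial realization of the Hopf algebra $\mathbf N(T(\Sigma))$. That is: (i) $\mathbin{+\!\!+}$ is associative; (ii) for every $\Sigma$-forest-like alphabet $A$, $r_A:\mathbf N(T(\Sigma))\to\mathbb K\langle A\rangle$ is a graded unital associative algebra morphism; (iii) for all $\Sigma$-forest-like alphabets $A_1,A_2$ and every $x\in\mathbf N(T(\Sigma))$, $\theta_{A_1,A_2}(r_{A_1\mathbin{+\!\!+}A_2}(x))=(r_{A_1}\otimes r_{A_2})(\Delta x)$; (iv) $r_{A_p(\Sigma)}$ is injective.
   Context: $\mathbb K$ is a field of characteristic zero; $[P]$ is $1$ if $P$ holds, $0$ otherwise. A signature is a set $\Sigma$ with arity map $|\cdot|:\Sigma\to\mathbb N$. A $\Sigma$-term is the leaf $\bot$ or $s(t_1,\dots,t_n)$ with $s$ of arity $n$, $t_i$ terms; degree = number of internal nodes, arity $|t|$ = number of leaves. $T(\Sigma)$ is the free operad: $t[t_1,\dots,t_{|t|}]$ grafts $t_i$ on the $i$-th leaf of $t$. A $\Sigma$-forest is a finite word of terms; reduced if no term is $\bot$; $\mathrm{rd}$ deletes terms equal to $\bot$. Internal nodes of a forest $f$ are identified with $1,\dots,\deg f$ by preorder; $d_f(i)$ decoration of $i$; $i\to^f_j i'$ means $i'$ is the $j$-th child of $i$; roots are the roots of terms. $\mathbf N(T(\Sigma))$: basis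 $E_f$ ($f$ reduced), product $E_{f_1}E_{f_2}=E_{f_1f_2}$, grading $\deg f$, coproduct the algebra morphism with $\Delta E_t=\sum E_{\mathrm{rd}(t')}\otimes E_{\mathrm{rd}(t_1\cdots t_{|t'|})}$ over all $t',t_1,\dots$ with $t=t'[t_1,\dots,t_{|t'|}]$. A $\Sigma$-forest-like alphabet is a set $A$ with arbitrary: subset $R^A$, subsets $D^A_s$ ($s\in\Sigma$), binary relations $\to^A_j$ ($j\ge1$). $\mathbb K\langle A\rangle$: noncommutative polynomials over $A$ with possibly infinite support and bounded degree. A word $w\in A^*$ is $A$-compatible with $f$ if it has length $\deg f$, $w(i)\in R^A$ for each root $i$, $w(i)\in D^A_{d_f(i)}$ for each $i$, and $i\to^f_j i'$ implies $w(i)\to^A_j w(i')$. $r_A(E_f)=\sum_{w\in A^*}[w\ A\text{-compatible with }f]\,w$. The disjoint sum $A_1\mathbin{+\!\!+}A_2$ is $A_1\sqcup A_2$ with $R=R^{A_1}\sqcup R^{A_2}$, $D_s=D^{A_1}_s\sqcup D^{A_2}_s$, and $a\to_j a'$ iff ($a,a'\in A_1$, $a\to^{A_1}_j a'$) or ($a,a'\in A_2$, $a\to^{A_2}_j a'$) or ($a\in A_1$, $a'\in A_2$, $a'\in R^{A_2}$). $\theta_{A_1,A_2}$ is the linear map $w\mapsto w_{|A_1}\otimes w_{|A_2}$. The alphabet of positions $A_p(\Sigma)=\{a^s_u:s\in\Sigma,u\in\mathbb N^*\}$ has root relation $\{a^s_{0^\ell}\}$, $D_s=\{a^s_u:u\in\mathbb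 N^*\}$, and $a^s_u\to_j a^{s'}_v$ iff $v=u\,j\,0^\ell$ for some $\ell\in\mathbb N$. *)

theory Defs
  imports Main
begin

datatype 's tm = Leaf | Node 's "'s tm list"

fun wf_tm :: "'s set \<Rightarrow> ('s \<Rightarrow> nat) \<Rightarrow> 's tm \<Rightarrow> bool" where
  "wf_tm S ar Leaf = True"
| "wf_tm S ar (Node s ts) = (s \<in> S \<and> length ts = ar s \<and> (\<forall>t\<in>set ts. wf_tm S ar t))"

fun deg :: "'s tm \<Rightarrow> nat" where
  "deg Leaf = 0"
| "deg (Node s ts) = Suc (sum_list (map deg ts))"

fun nlv :: "'s tm \<Rightarrow> nat" where
  "nlv Leaf = 1"
| "nlv (Node s ts) = sum_list (map nlv ts)"

text \<open>Grafting: graft t [t1,...,tn] grafts ti on the i-th leaf of t (n = nlv t).\<close>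
fun graft :: "'s tm \<Rightarrow> 's tm list \<Rightarrow> 's tm"
and graftl :: "'s tm list \<Rightarrow> 's tm list \<Rightarrow> 's tm list" where
  "graft Leaf us = (case us of [] \<Rightarrow> Leaf | u # _ \<Rightarrow> u)"
| "graft (Node s ts) us = Node s (graftl ts us)"
| "graftl [] us = []"
| "graftl (t # ts) us = graft t (take (nlv t) us) # graftl ts (drop (nlv t) us)"

type_synonym 's forest = "'s tm list"

definition wf_forest :: "'s set \<Rightarrow> ('s \<Rightarrow> nat) \<Rightarrow> 's forest \<Rightarrow> bool" where
  "wf_forest S ar f \<longleftrightarrow> (\<forall>t\<in>set f. wf_tm S ar t)"

definition reduced :: "'s forest \<Rightarrow> bool" where
  "reduced f \<longleftrightarrow> Leaf \<notin> set f"

definition rd :: "'s forest \<Rightarrow> 's forest" where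
  "rd f = filter (\<lambda>t. t \<noteq> Leaf) f"

definition fdeg :: "'s forest \<Rightarrow> nat" where
  "fdeg f = sum_list (map deg f)"

text \<open>Preorder numbering of internal nodes.  pre n t lists the internal nodes
  of t in preorder, the root of t getting number n; each entry records the
  decoration and, for the j-th child (j = 1, 2, ... = position in the list + 1),
  Some (number of that child) if the child is an internal node, None if it is a leaf.\<close>
fun pre :: "nat \<Rightarrow> 's tm \<Rightarrow> ('s \<times> nat option list) list"
and prel :: "nat \<Rightarrow> 's tm list \<Rightarrow> nat option list \<times> ('s \<times> nat option list) list" where
  "pre n Leaf = []"
| "pre n (Node s ts) = (case prel (Suc n) ts of (cs, rest) \<Rightarrow> (s, cs) # rest)"
| "prel n [] = ([], [])"
| "prel n (t # ts) = (case prel (n + deg t) ts of (cs, rest) \<Rightarrow>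
      ((if t = Leaf then None else Some n) # cs, pre n t @ rest))"

text \<open>Nodes of a forest, numbered 1..fdeg f in preorder.\<close>
fun fnodes_from :: "nat \<Rightarrow> 's forest \<Rightarrow> ('s \<times> nat option list) list" where
  "fnodes_from n [] = []"
| "fnodes_from n (t # ts) = pre n t @ fnodes_from (n + deg t) ts"

fun froots_from :: "nat \<Rightarrow> 's forest \<Rightarrow> nat set" where
  "froots_from n [] = {}"
| "froots_from n (t # ts) = (if t = Leaf then {} else {n}) \<union> froots_from (n + deg t) ts"

definition fnodes :: "'s forest \<Rightarrow> ('s \<times> nat option list) list" where
  "fnodes f = fnodes_from 1 f"

definition froots :: "'s forest \<Rightarrow> nat set" where
  "froots f = froots_from 1 f"

definition dec :: "'s forest \<Rightarrow> nat \<Rightarrow> 's" where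
  "dec f i = fst (fnodes f ! (i - 1))"

definition child :: "'s forest \<Rightarrow> nat \<Rightarrow> nat \<Rightarrow> nat \<Rightarrow> bool" where
  "child f i j i' \<longleftrightarrow> 1 \<le> i \<and> i \<le> fdeg f \<and> 1 \<le> j \<and> j \<le> length (snd (fnodes f ! (i - 1)))
      \<and> snd (fnodes f ! (i - 1)) ! (j - 1) = Some i'"

text \<open>An element of N(T(Sigma)) is a finitely supported function on forests,
  supported on reduced Sigma-forests: x = sum_f (x f) E_f.\<close>
definition N_elem :: "'s set \<Rightarrow> ('s \<Rightarrow> nat) \<Rightarrow> ('s forest \<Rightarrow> 'k::field_char_0) \<Rightarrow> bool" where
  "N_elem S ar x \<longleftrightarrow> finite {f. x f \<noteq> 0} \<and>
     (\<forall>f. x f \<noteq> 0 \<longrightarrow> wf_forest S ar f \<and> reduced f)"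

definition basisE :: "'s forest \<Rightarrow> ('s forest \<Rightarrow> 'k::field_char_0)" where
  "basisE f = (\<lambda>g. if g = f then 1 else 0)"

text \<open>product E_f1 E_f2 = E_(f1 f2), extended bilinearly; the unit is E_[]\<close>
definition N_mult :: "('s forest \<Rightarrow> 'k::field_char_0) \<Rightarrow> ('s forest \<Rightarrow> 'k) \<Rightarrow> ('s forest \<Rightarrow> 'k)" where
  "N_mult x y = (\<lambda>h. \<Sum>i\<le>length h. x (take i h) * y (drop i h))"

definition N_unit :: "'s forest \<Rightarrow> 'k::field_char_0" where
  "N_unit = basisE []"

definition N_homog :: "nat \<Rightarrow> ('s forest \<Rightarrow> 'k::field_char_0) \<Rightarrow> bool" where
  "N_homog n x \<longleftrightarrow> (\<forall>f. x f \<noteq> 0 \<longrightarrow> fdeg f = n)"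

definition decomps :: "'s set \<Rightarrow> ('s \<Rightarrow> nat) \<Rightarrow> 's tm \<Rightarrow> ('s tm \<times> 's tm list) set" where
  "decomps S ar t = {(t', us). wf_tm S ar t' \<and> (\<forall>u\<in>set us. wf_tm S ar u)
      \<and> length us = nlv t' \<and> graft t' us = t}"

text \<open>Coproduct on basis elements: Delta E_t = sum over decompositions of
  E_rd(t') (x) E_rd(t1...tk); on a forest f = t_1...t_n, Delta is multiplicative,
  Delta E_f = prod_i Delta E_(t_i), with (a (x) b)(c (x) d) = ac (x) bd.
  Expanding this product: the coefficient of E_g (x) E_h counts the tuples of
  decompositions (one for each t_i) producing g and h.\<close>
definition Delta_basis :: "'s set \<Rightarrow> ('s \<Rightarrow> nat) \<Rightarrow> 's forest \<Rightarrow> ('s forest \<times> 's forest \<Rightarrow> 'k::field_char_0)" where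
  "Delta_basis S ar f = (\<lambda>(g, h). of_nat (card {ds. length ds = length f
      \<and> (\<forall>i<length f. ds ! i \<in> decomps S ar (f ! i))
      \<and> concat (map (\<lambda>d. rd [fst d]) ds) = g
      \<and> concat (map (\<lambda>d. rd (snd d)) ds) = h}))"

text \<open>Delta extended linearly; elements of N (x) N are finitely supported
  functions on pairs of forests.\<close>
definition Delta :: "'s set \<Rightarrow> ('s \<Rightarrow> nat) \<Rightarrow> ('s forest \<Rightarrow> 'k::field_char_0) \<Rightarrow> ('s forest \<times> 's forest \<Rightarrow> 'k)" where
  "Delta S ar x = (\<lambda>p. \<Sum>f\<in>{f. x f \<noteq> 0}. x f * Delta_basis S ar f p)"

record ('s, 'a) fla =
  carrier :: "'a set"
  Rt :: "'a set"
  Dc :: "'s \<Rightarrow> 'a set"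
  Ar :: "nat \<Rightarrow> 'a \<Rightarrow> 'a \<Rightarrow> bool"

text \<open>A Sigma-forest-like alphabet: a set A with a subset R^A, subsets D^A_s
  (s in Sigma) and binary relations ->_j on A (only j >= 1 is used).\<close>
definition is_fla :: "'s set \<Rightarrow> ('s, 'a) fla \<Rightarrow> bool" where
  "is_fla S A \<longleftrightarrow> Rt A \<subseteq> carrier A \<and> (\<forall>s\<in>S. Dc A s \<subseteq> carrier A)
     \<and> (\<forall>j a a'. Ar A j a a' \<longrightarrow> a \<in> carrier A \<and> a' \<in> carrier A)"

definition fla_sum :: "('s, 'a) fla \<Rightarrow> ('s, 'b) fla \<Rightarrow> ('s, 'a + 'b) fla" where
  "fla_sum A1 A2 = \<lparr> carrier = Inl ` carrier A1 \<union> Inr ` carrier A2,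
     Rt = Inl ` Rt A1 \<union> Inr ` Rt A2,
     Dc = (\<lambda>s. Inl ` Dc A1 s \<union> Inr ` Dc A2 s),
     Ar = (\<lambda>j x y. case (x, y) of
        (Inl a, Inl a') \<Rightarrow> Ar A1 j a a'
      | (Inr a, Inr a') \<Rightarrow> Ar A2 j a a'
      | (Inl a, Inr a') \<Rightarrow> a \<in> carrier A1 \<and> a' \<in> Rt A2
      | (Inr a, Inl a') \<Rightarrow> False) \<rparr>"

text \<open>Transport of an alphabet along a map (used with the canonical bijection
  (A1 ++ A2) ++ A3 = A1 ++ (A2 ++ A3)).\<close>
definition fla_map :: "('a \<Rightarrow> 'b) \<Rightarrow> ('s, 'a) fla \<Rightarrow> ('s, 'b) fla" where
  "fla_map g A = \<lparr> carrier = g ` carrier A, Rt = g ` Rt A, Dc = (\<lambda>s. g ` Dc A s),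
     Ar = (\<lambda>j b b'. \<exists>a a'. b = g a \<and> b' = g a' \<and> Ar A j a a') \<rparr>"

fun sum_assoc :: "('a + 'b) + 'c \<Rightarrow> 'a + ('b + 'c)" where
  "sum_assoc (Inl (Inl a)) = Inl a"
| "sum_assoc (Inl (Inr b)) = Inr (Inl b)"
| "sum_assoc (Inr c) = Inr (Inr c)"

text \<open>Possibly infinite support, bounded degree; elements are functions from words to K.\<close>
definition kpoly :: "('s, 'a) fla \<Rightarrow> ('a list \<Rightarrow> 'k::field_char_0) \<Rightarrow> bool" where
  "kpoly A p \<longleftrightarrow> (\<forall>w. p w \<noteq> 0 \<longrightarrow> set w \<subseteq> carrier A)
     \<and> (\<exists>n. \<forall>w. p w \<noteq> 0 \<longrightarrow> length w \<le> n)"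

definition poly_mult :: "('a list \<Rightarrow> 'k::field_char_0) \<Rightarrow> ('a list \<Rightarrow> 'k) \<Rightarrow> ('a list \<Rightarrow> 'k)" where
  "poly_mult p q = (\<lambda>w. \<Sum>i\<le>length w. p (take i w) * q (drop i w))"

definition poly_one :: "'a list \<Rightarrow> 'k::field_char_0" where
  "poly_one = (\<lambda>w. if w = [] then 1 else 0)"

definition poly_homog :: "nat \<Rightarrow> ('a list \<Rightarrow> 'k::field_char_0) \<Rightarrow> bool" where
  "poly_homog n p \<longleftrightarrow> (\<forall>w. p w \<noteq> 0 \<longrightarrow> length w = n)"

definition compatible :: "('s, 'a) fla \<Rightarrow> 's forest \<Rightarrow> 'a list \<Rightarrow> bool" where
  "compatible A f w \<longleftrightarrow> length w = fdeg f \<and> set w \<subseteq> carrier A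
     \<and> (\<forall>i\<in>froots f. w ! (i - 1) \<in> Rt A)
     \<and> (\<forall>i. 1 \<le> i \<and> i \<le> fdeg f \<longrightarrow> w ! (i - 1) \<in> Dc A (dec f i))
     \<and> (\<forall>i j i'. child f i j i' \<longrightarrow> Ar A j (w ! (i - 1)) (w ! (i' - 1)))"

definition r_basis :: "('s, 'a) fla \<Rightarrow> 's forest \<Rightarrow> ('a list \<Rightarrow> 'k::field_char_0)" where
  "r_basis A f = (\<lambda>w. if compatible A f w then 1 else 0)"

definition r_map :: "('s, 'a) fla \<Rightarrow> ('s forest \<Rightarrow> 'k::field_char_0) \<Rightarrow> ('a list \<Rightarrow> 'k)" where
  "r_map A x = (\<lambda>w. \<Sum>f\<in>{f. x f \<noteq> 0}. x f * r_basis A f w)"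

text \<open>theta_{A1,A2}: w \<mapsto> w|A1 (x) w|A2, extended linearly; the target is
  represented by functions on pairs of words.\<close>
definition restr_l :: "('a + 'b) list \<Rightarrow> 'a list" where
  "restr_l w = concat (map (case_sum (\<lambda>a. [a]) (\<lambda>_. [])) w)"

definition restr_r :: "('a + 'b) list \<Rightarrow> 'b list" where
  "restr_r w = concat (map (case_sum (\<lambda>_. []) (\<lambda>b. [b])) w)"

definition theta :: "(('a + 'b) list \<Rightarrow> 'k::field_char_0) \<Rightarrow> ('a list \<times> 'b list \<Rightarrow> 'k)" where
  "theta p = (\<lambda>(u, v). \<Sum>w\<in>{w. restr_l w = u \<and> restr_r w = v}. p w)"

definition r_tensor :: "('s, 'a) fla \<Rightarrow> ('s, 'b) fla \<Rightarrow> ('s forest \<times> 's forest \<Rightarrow> 'k::field_char_0)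
    \<Rightarrow> ('a list \<times> 'b list \<Rightarrow> 'k)" where
  "r_tensor A1 A2 z = (\<lambda>(u, v). \<Sum>p\<in>{p. z p \<noteq> 0}.
      z p * r_basis A1 (fst p) u * r_basis A2 (snd p) v)"

definition A_pos :: "'s set \<Rightarrow> ('s, 's \<times> nat list) fla" where
  "A_pos S = \<lparr> carrier = {(s, u). s \<in> S},
     Rt = {(s, replicate l 0) | s l. s \<in> S},
     Dc = (\<lambda>s. if s \<in> S then {(s, u) | u. True} else {}),
     Ar = (\<lambda>j (s, u) (s', v). s \<in> S \<and> s' \<in> S \<and> (\<exists>l. v = u @ [j] @ replicate l 0)) \<rparr>"

end

theory Submission
  imports Defs
begin


fun tc :: "('s, 'a) fla \<Rightarrow> ('a \<Rightarrow> bool) \<Rightarrow> 's tm \<Rightarrow> 'a list \<Rightarrow> bool"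
and tcl :: "('s, 'a) fla \<Rightarrow> 'a \<Rightarrow> nat \<Rightarrow> 's tm list \<Rightarrow> 'a list \<Rightarrow> bool" where
  "tc A P Leaf w = (w = [])"
| "tc A P (Node s ts) w = (case w of [] \<Rightarrow> False | a # w' \<Rightarrow>
     a \<in> carrier A \<and> P a \<and> a \<in> Dc A s \<and> tcl A a 1 ts w')"
| "tcl A a j [] w = (w = [])"
| "tcl A a j (t # ts) w = (tc A (Ar A j a) t (take (deg t) w) \<and> tcl A a (Suc j) ts (drop (deg t) w))"

fun fc :: "('s, 'a) fla \<Rightarrow> 's forest \<Rightarrow> 'a list \<Rightarrow> bool" where
  "fc A [] w = (w = [])"
| "fc A (t # ts) w = (tc A (\<lambda>a. a \<in> Rt A) t (take (deg t) w) \<and> fc A ts (drop (deg t) w))"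

lemma tc_length:
  "tc A P t w \<Longrightarrow> length w = deg t"
  "tcl A a j ts w \<Longrightarrow> length w = sum_list (map deg ts)"
proof (induction A P t w and A a j ts w rule: tc_tcl.induct)
  case (2 A P s ts w)
  then show ?case by (cases w) auto
next
  case (4 A a j t ts w)
  then show ?case
  proof -
    have "length (take (deg t) w) = deg t" using 4 by auto
    then have "deg t \<le> length w" by simp
    then show ?thesis using 4 by auto
  qed
qed auto

lemma fc_length: "fc A f w \<Longrightarrow> length w = fdeg f"
proof (induction f arbitrary: w)
  case (Cons t ts)
  then have "length (take (deg t) w) = deg t" by (auto dest: tc_length)
  then have "deg t \<le> length w" by simp
  then show ?case using Cons Cons.IH[of "drop (deg t) w"] by (auto simp: fdeg_def)
qed (auto simp: fdeg_def)

definition bnd :: "nat \<Rightarrow> nat \<Rightarrow> ('s \<times> nat option list) list \<Rightarrow> bool" where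
  "bnd lo hi L \<longleftrightarrow> (\<forall>e\<in>set L. \<forall>i. Some i \<in> set (snd e) \<longrightarrow> lo \<le> i \<and> i < hi)"

lemma bnd_mono: "bnd lo hi L \<Longrightarrow> lo' \<le> lo \<Longrightarrow> hi \<le> hi' \<Longrightarrow> bnd lo' hi' L"
  unfolding bnd_def by fastforce

lemma bnd_append[simp]: "bnd lo hi (L1 @ L2) \<longleftrightarrow> bnd lo hi L1 \<and> bnd lo hi L2"
  unfolding bnd_def by auto

lemma bnd_Cons[simp]: "bnd lo hi (e # L) \<longleftrightarrow> (\<forall>i. Some i \<in> set (snd e) \<longrightarrow> lo \<le> i \<and> i < hi) \<and> bnd lo hi L"
  unfolding bnd_def by auto

lemma bnd_Nil[simp]: "bnd lo hi []"
  unfolding bnd_def by auto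

lemma deg_pos: "t \<noteq> Leaf \<Longrightarrow> 0 < deg t"
  by (cases t) auto

lemma pre_facts:
  fixes t :: "'s tm" and ts :: "'s tm list"
  shows "length (pre n t) = deg t \<and> bnd (Suc n) (n + deg t) (pre n t)"
  "length (fst (prel m ts)) = length ts \<and> length (snd (prel m ts)) = sum_list (map deg ts)
    \<and> bnd (Suc m) (m + sum_list (map deg ts)) (snd (prel m ts))
    \<and> (\<forall>i. Some i \<in> set (fst (prel m ts)) \<longrightarrow> m \<le> i \<and> i < m + sum_list (map deg ts))"
proof (induction n t and m ts rule: pre_prel.induct)
  case (2 n s ts)
  obtain cs rest where p: "prel (Suc n) ts = (cs, rest)" by (cases "prel (Suc n) ts")
  show ?case using 2 p by (auto intro: bnd_mono)
next
  case (4 n t ts)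
  obtain cs rest where p: "prel (n + deg t) ts = (cs, rest)" by (cases "prel (n + deg t) ts")
  have d: "t \<noteq> Leaf \<Longrightarrow> 0 < deg t" by (rule deg_pos)
  show ?case using 4 p d by (auto intro: bnd_mono)
qed auto

definition good :: "('s, 'a) fla \<Rightarrow> nat \<Rightarrow> ('s \<times> nat option list) list \<Rightarrow> 'a list \<Rightarrow> bool" where
  "good A n L w \<longleftrightarrow> length w = length L \<and> set w \<subseteq> carrier A \<and>
    (\<forall>k<length L. w!k \<in> Dc A (fst (L!k)) \<and> (\<forall>j<length (snd (L!k)). \<forall>i'.
       snd (L!k)!j = Some i' \<longrightarrow> Ar A (Suc j) (w!k) (w!(i'-n))))"

lemma all_less_add: "(\<forall>k<(a::nat) + b. P k) \<longleftrightarrow> (\<forall>k<a. P k) \<and> (\<forall>k<b. P (a + k))"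
proof
  assume H: "\<forall>k<a+b. P k" show "(\<forall>k<a. P k) \<and> (\<forall>k<b. P (a+k))"
  proof (intro conjI allI impI)
    fix k assume "k<a" then have "k < a + b" by (rule trans_less_add1)
    then show "P k" using H by blast
  next
    fix k assume "k<b" then show "P (a+k)" using H by simp
  qed
next
  assume H: "(\<forall>k<a. P k) \<and> (\<forall>k<b. P (a+k))"
  show "\<forall>k<a+b. P k"
  proof (intro allI impI)
    fix k assume k: "k < a+b"
    show "P k"
    proof (cases "k<a")
      case True then show ?thesis using H by auto
    next
      case False then have "k = a + (k-a)" "k-a<b" using k by auto
      then show ?thesis using H by metis
    qed
  qed
qed

lemma all_less_Suc_conv: "(\<forall>k<Suc m. P k) \<longleftrightarrow> P 0 \<and> (\<forall>k<m. P (Suc k))"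
  using less_Suc_eq_0_disj by auto

lemma good_append:
  assumes b1: "bnd n (n + length L1) L1" and b2: "bnd (n + length L1) hi L2"
  shows "good A n (L1 @ L2) w \<longleftrightarrow> length w = length L1 + length L2 \<and>
     good A n L1 (take (length L1) w) \<and> good A (n + length L1) L2 (drop (length L1) w)"
proof (cases "length w = length L1 + length L2")
  case False thus ?thesis by (auto simp: good_def)
next
  case True
  let ?l = "length L1"
  define C where "C L v m k \<longleftrightarrow> v!k \<in> Dc A (fst (L!k)) \<and> (\<forall>j<length (snd (L!k)). \<forall>i'.
       snd (L!k)!j = Some i' \<longrightarrow> Ar A (Suc j) (v!k) (v!(i'-m)))" for L v m k
  have e1: "C (L1@L2) w n k \<longleftrightarrow> C L1 (take ?l w) n k" if k: "k < ?l" for k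
  proof -
    have r: "snd (L1!k)!j = Some i' \<Longrightarrow> j < length (snd (L1!k)) \<Longrightarrow> i' - n < ?l" for j i'
    proof -
      assume a1: "snd (L1!k)!j = Some i'" and a2: "j < length (snd (L1!k))"
      have "Some i' \<in> set (snd (L1!k))" using a1 a2 by (metis nth_mem)
      then have "n \<le> i' \<and> i' < n + ?l" using b1 k unfolding bnd_def by auto
      then show ?thesis by arith
    qed
    show ?thesis unfolding C_def using k r True by (auto simp: nth_append)
  qed
  have e2: "C (L1@L2) w n (?l + k) \<longleftrightarrow> C L2 (drop ?l w) (n + ?l) k" if k: "k < length L2" for k
  proof -
    have r: "snd (L2!k)!j = Some i' \<Longrightarrow> j < length (snd (L2!k)) \<Longrightarrow> i' - n = ?l + (i' - (n + ?l))" for j i'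
    proof -
      assume a1: "snd (L2!k)!j = Some i'" and a2: "j < length (snd (L2!k))"
      have "Some i' \<in> set (snd (L2!k))" using a1 a2 by (metis nth_mem)
      then have "n + ?l \<le> i'" using b2 k unfolding bnd_def by auto
      then show ?thesis by arith
    qed
    have r2: "w ! (?l + m) = drop ?l w ! m" for m using True by simp
    show ?thesis unfolding C_def using k r True by (auto simp: nth_append)
  qed
  have s: "set w \<subseteq> carrier A \<longleftrightarrow> set (take ?l w) \<subseteq> carrier A \<and> set (drop ?l w) \<subseteq> carrier A"
    by (metis append_take_drop_id set_append Un_subset_iff)
  have "good A n (L1 @ L2) w \<longleftrightarrow> set w \<subseteq> carrier A \<and> (\<forall>k<?l + length L2. C (L1@L2) w n k)"
    using True unfolding good_def C_def by simp
  also have "\<dots> \<longleftrightarrow> set w \<subseteq> carrier A \<and> (\<forall>k<?l. C L1 (take ?l w) n k) \<and> (\<forall>k<length L2. C L2 (drop ?l w) (n + ?l) k)"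
    unfolding all_less_add using e1 e2 by auto
  also have "\<dots> \<longleftrightarrow> good A n L1 (take (length L1) w) \<and> good A (n + length L1) L2 (drop (length L1) w)"
    using True s unfolding good_def C_def by auto
  finally show ?thesis using True by simp
qed

lemma good_Cons:
  assumes b: "bnd (Suc n) hi L"
  shows "good A n (e # L) (a # w) \<longleftrightarrow> a \<in> carrier A \<and> a \<in> Dc A (fst e) \<and>
     (\<forall>j<length (snd e). \<forall>i'. snd e ! j = Some i' \<longrightarrow> Ar A (Suc j) a ((a # w) ! (i' - n)))
     \<and> good A (Suc n) L w"
proof -
  define C where "C L v m k \<longleftrightarrow> v!k \<in> Dc A (fst (L!k)) \<and> (\<forall>j<length (snd (L!k)). \<forall>i'.
       snd (L!k)!j = Some i' \<longrightarrow> Ar A (Suc j) (v!k) (v!(i'-m)))" for L v m k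
  have e2: "C (e#L) (a#w) n (Suc k) \<longleftrightarrow> C L w (Suc n) k" if k: "k < length L" for k
  proof -
    have r: "snd (L!k)!j = Some i' \<Longrightarrow> j < length (snd (L!k)) \<Longrightarrow> i' - n = Suc (i' - Suc n)" for j i'
    proof -
      assume a1: "snd (L!k)!j = Some i'" and a2: "j < length (snd (L!k))"
      have "Some i' \<in> set (snd (L!k))" using a1 a2 by (metis nth_mem)
      then have "Suc n \<le> i'" using b k unfolding bnd_def by auto
      then show ?thesis by arith
    qed
    show ?thesis unfolding C_def using k r by auto
  qed
  have "good A n (e # L) (a # w) \<longleftrightarrow> length w = length L \<and> set (a#w) \<subseteq> carrier A \<and> (\<forall>k<Suc (length L). C (e#L) (a#w) n k)"
    unfolding good_def C_def by simp
  also have "\<dots> \<longleftrightarrow> length w = length L \<and> set (a#w) \<subseteq> carrier A \<and> C (e#L) (a#w) n 0 \<and> (\<forall>k<length L. C L w (Suc n) k)"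
    unfolding all_less_Suc_conv using e2 by auto
  also have "\<dots> \<longleftrightarrow> a \<in> carrier A \<and> a \<in> Dc A (fst e) \<and>
     (\<forall>j<length (snd e). \<forall>i'. snd e ! j = Some i' \<longrightarrow> Ar A (Suc j) a ((a # w) ! (i' - n)))
     \<and> good A (Suc n) L w"
    unfolding good_def C_def by auto
  finally show ?thesis .
qed


lemma pre_tc:
  fixes t :: "'s tm" and ts :: "'s tm list" and A :: "('s, 'a) fla"
  shows "\<forall>P w. tc A P t w \<longleftrightarrow> good A n (pre n t) w \<and> (t \<noteq> Leaf \<longrightarrow> P (w!0))"
    "\<forall>a j w. tcl A a j ts w \<longleftrightarrow> good A m (snd (prel m ts)) w \<and>
      (\<forall>k<length ts. \<forall>i'. fst (prel m ts)!k = Some i' \<longrightarrow> Ar A (j+k) a (w!(i'-m)))"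
proof (induction n t and m ts rule: pre_prel.induct)
  case (1 n)
  then show ?case by (auto simp: good_def)
next
  case (2 n s ts)
  obtain cs rest where p: "prel (Suc n) ts = (cs, rest)" by (cases "prel (Suc n) ts")
  have f: "length cs = length ts" "bnd (Suc (Suc n)) (Suc n + sum_list (map deg ts)) rest"
     "\<And>i. Some i \<in> set cs \<Longrightarrow> Suc n \<le> i"
    using pre_facts(2)[of "Suc n" ts] p by auto
  have b: "bnd (Suc n) (Suc n + sum_list (map deg ts)) rest" using f(2) by (rule bnd_mono) auto
  have pre: "pre n (Node s ts) = (s, cs) # rest" using p by simp
  show ?case
  proof (intro allI)
    fix P and w :: "'a list"
    show "tc A P (Node s ts) w = (good A n (pre n (Node s ts)) w \<and> (Node s ts \<noteq> Leaf \<longrightarrow> P (w ! 0)))"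
    proof (cases w)
      case Nil
      show ?thesis unfolding pre Nil by (simp add: good_def)
    next
      case (Cons a w')
      have ih: "tcl A a 1 ts w' \<longleftrightarrow> good A (Suc n) rest w' \<and>
        (\<forall>k<length ts. \<forall>i'. cs!k = Some i' \<longrightarrow> Ar A (Suc k) a (w'!(i'-Suc n)))"
        using 2 p by simp
      have e: "(\<forall>j<length cs. \<forall>i'. cs ! j = Some i' \<longrightarrow> Ar A (Suc j) a ((a # w') ! (i' - n))) \<longleftrightarrow>
           (\<forall>k<length ts. \<forall>i'. cs!k = Some i' \<longrightarrow> Ar A (Suc k) a (w'!(i'-Suc n)))"
      proof -
        have "cs ! j = Some i' \<Longrightarrow> j < length cs \<Longrightarrow> (a # w') ! (i' - n) = w'!(i'-Suc n)" for j i'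
        proof -
          assume "cs ! j = Some i'" "j < length cs"
          then have "Some i' \<in> set cs" by (metis nth_mem)
          then have "Suc n \<le> i'" using f(3) by blast
          then have "i' - n = Suc (i' - Suc n)" by arith
          then show ?thesis by simp
        qed
        then show ?thesis using f(1) by auto
      qed
      show ?thesis unfolding pre Cons good_Cons[OF b] using e ih by auto
    qed
  qed
next
  case (3 n)
  then show ?case by (auto simp: good_def)
next
  case (4 m t ts)
  obtain cs rest where p: "prel (m + deg t) ts = (cs, rest)" by (cases "prel (m + deg t) ts")
  define x where "x = (if t = Leaf then None else Some m)"
  have pr: "prel m (t # ts) = (x # cs, pre m t @ rest)" using p by (simp add: x_def)
  have f: "length cs = length ts" "bnd (Suc (m + deg t)) (m + deg t + sum_list (map deg ts)) rest"
     "\<And>i. Some i \<in> set cs \<Longrightarrow> m + deg t \<le> i" "length rest = sum_list (map deg ts)"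
    using pre_facts(2)[of "m + deg t" ts] p by auto
  have g: "length (pre m t) = deg t" "bnd (Suc m) (m + deg t) (pre m t)" using pre_facts(1)[of m t] by auto
  have b1: "bnd m (m + length (pre m t)) (pre m t)" using g by (auto intro: bnd_mono)
  have b2: "bnd (m + length (pre m t)) (m + deg t + sum_list (map deg ts)) rest" using g f(2) by (auto intro: bnd_mono)
  have ih2: "tcl A a (Suc j) ts v \<longleftrightarrow> good A (m + deg t) rest v \<and>
      (\<forall>k<length ts. \<forall>i'. cs!k = Some i' \<longrightarrow> Ar A (Suc j + k) a (v!(i'-(m + deg t))))" for a j v
    using 4(1) p by simp
  have ih1: "tc A P t v \<longleftrightarrow> good A m (pre m t) v \<and> (t \<noteq> Leaf \<longrightarrow> P (v!0))" for P v
    using 4(2)[of cs rest] p by auto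
  show ?case
  proof (intro allI)
    fix a j and w :: "'a list"
    show "tcl A a j (t # ts) w = (good A m (snd (prel m (t # ts))) w \<and>
          (\<forall>k<length (t # ts). \<forall>i'. fst (prel m (t # ts)) ! k = Some i' \<longrightarrow> Ar A (j + k) a (w ! (i' - m))))"
    proof (cases "length w = deg t + sum_list (map deg ts)")
      case False
      have "\<not> tcl A a j (t # ts) w"
      proof
        assume "tcl A a j (t # ts) w"
        then have "length w = sum_list (map deg (t # ts))" by (rule tc_length(2))
        then show False using False by simp
      qed
      moreover have "\<not> good A m (snd (prel m (t # ts))) w" using False g f(4) pr by (auto simp: good_def)
      ultimately show ?thesis by blast
    next
      case True
      have dl: "deg t \<le> length w" using True by simp
      have k0: "(\<forall>i'. x = Some i' \<longrightarrow> Ar A j a (w ! (i' - m))) \<longleftrightarrow> (t \<noteq> Leaf \<longrightarrow> Ar A j a (take (deg t) w ! 0))"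
      proof (cases "t = Leaf")
        case False
        then have "0 < deg t" by (rule deg_pos)
        then show ?thesis using False by (simp add: x_def)
      qed (simp add: x_def)
      have ks: "(\<forall>k<length ts. \<forall>i'. cs!k = Some i' \<longrightarrow> Ar A (j + Suc k) a (w ! (i' - m))) \<longleftrightarrow>
          (\<forall>k<length ts. \<forall>i'. cs!k = Some i' \<longrightarrow> Ar A (Suc j + k) a (drop (deg t) w ! (i'-(m + deg t))))"
      proof -
        have "cs ! k = Some i' \<Longrightarrow> k < length cs \<Longrightarrow> drop (deg t) w ! (i'-(m + deg t)) = w ! (i' - m)" for k i'
        proof -
          assume "cs ! k = Some i'" "k < length cs"
          then have "Some i' \<in> set cs" by (metis nth_mem)
          then have "m + deg t \<le> i'" using f(3) by blast
          then have "i' - m = deg t + (i' - (m + deg t))" by arith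
          then show ?thesis using dl by simp
        qed
        then show ?thesis using f(1) by auto
      qed
      show ?thesis
        unfolding pr fst_conv snd_conv good_append[OF b1 b2] g(1) length_Cons all_less_Suc_conv
          tcl.simps ih1 ih2
        using k0 ks True f(4) by auto
    qed
  qed
qed


lemma fdeg_Nil[simp]: "fdeg [] = 0" and fdeg_Cons[simp]: "fdeg (t # ts) = deg t + fdeg ts"
  by (auto simp: fdeg_def)

lemma fdeg_append[simp]: "fdeg (f @ g) = fdeg f + fdeg g"
  by (auto simp: fdeg_def)

lemma fnodes_facts:
  "length (fnodes_from n f) = fdeg f \<and> bnd (Suc n) (n + fdeg f) (fnodes_from n f)
   \<and> (\<forall>i\<in>froots_from n f. n \<le> i \<and> i < n + fdeg f)"
proof (induction f arbitrary: n)
  case (Cons t ts)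
  have g: "length (pre n t) = deg t" "bnd (Suc n) (n + deg t) (pre n t)" using pre_facts(1)[of n t] by auto
  have h: "length (fnodes_from (n + deg t) ts) = fdeg ts"
    "bnd (Suc (n + deg t)) (n + deg t + fdeg ts) (fnodes_from (n + deg t) ts)"
    "\<forall>i\<in>froots_from (n + deg t) ts. n + deg t \<le> i \<and> i < n + deg t + fdeg ts"
    using Cons[of "n + deg t"] by auto
  have d: "t \<noteq> Leaf \<Longrightarrow> 0 < deg t" by (rule deg_pos)
  show ?case using g h d by (auto intro: bnd_mono)
qed simp

lemma fnodes_fc:
  "\<forall>w. fc A f w \<longleftrightarrow> good A n (fnodes_from n f) w \<and> (\<forall>i\<in>froots_from n f. w!(i-n) \<in> Rt A)"
proof (induction f arbitrary: n)
  case Nil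
  then show ?case by (auto simp: good_def)
next
  case (Cons t ts)
  have g: "length (pre n t) = deg t" "bnd (Suc n) (n + deg t) (pre n t)" using pre_facts(1)[of n t] by auto
  have h: "length (fnodes_from (n + deg t) ts) = fdeg ts"
    "bnd (Suc (n + deg t)) (n + deg t + fdeg ts) (fnodes_from (n + deg t) ts)"
    "\<forall>i\<in>froots_from (n + deg t) ts. n + deg t \<le> i \<and> i < n + deg t + fdeg ts"
    using fnodes_facts[of "n + deg t" ts] by auto
  have b1: "bnd n (n + length (pre n t)) (pre n t)" using g by (auto intro: bnd_mono)
  have b2: "bnd (n + length (pre n t)) (n + deg t + fdeg ts) (fnodes_from (n + deg t) ts)"
    using g h by (auto intro: bnd_mono)
  show ?case
  proof (intro allI)
    fix w
    show "fc A (t # ts) w = (good A n (fnodes_from n (t # ts)) w \<and> (\<forall>i\<in>froots_from n (t # ts). w ! (i - n) \<in> Rt A))"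
    proof (cases "length w = deg t + fdeg ts")
      case False
      have "\<not> fc A (t # ts) w"
      proof
        assume "fc A (t # ts) w"
        then have "length w = fdeg (t # ts)" by (rule fc_length)
        then show False using False by simp
      qed
      moreover have "\<not> good A n (fnodes_from n (t # ts)) w" using False g h by (auto simp: good_def)
      ultimately show ?thesis by blast
    next
      case True
      have dl: "deg t \<le> length w" using True by simp
      have r1: "(\<forall>i\<in>(if t = Leaf then {} else {n}). w ! (i - n) \<in> Rt A) \<longleftrightarrow> (t \<noteq> Leaf \<longrightarrow> take (deg t) w ! 0 \<in> Rt A)"
      proof (cases "t = Leaf")
        case False
        then have "0 < deg t" by (rule deg_pos)
        then show ?thesis using False by simp
      qed simp
      have r2: "(\<forall>i\<in>froots_from (n + deg t) ts. w ! (i - n) \<in> Rt A) \<longleftrightarrow>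
          (\<forall>i\<in>froots_from (n + deg t) ts. drop (deg t) w ! (i - (n + deg t)) \<in> Rt A)"
      proof -
        have "i \<in> froots_from (n + deg t) ts \<Longrightarrow> drop (deg t) w ! (i - (n + deg t)) = w ! (i - n)" for i
        proof -
          assume "i \<in> froots_from (n + deg t) ts"
          then have "n + deg t \<le> i" using h(3) by blast
          then have "i - n = deg t + (i - (n + deg t))" by arith
          then show ?thesis using dl by simp
        qed
        then show ?thesis by auto
      qed
      have ih: "fc A ts v \<longleftrightarrow> good A (n + deg t) (fnodes_from (n + deg t) ts) v \<and>
          (\<forall>i\<in>froots_from (n + deg t) ts. v ! (i - (n + deg t)) \<in> Rt A)" for v
        by (rule Cons.IH[rule_format])
      have pt: "tc A (\<lambda>a. a \<in> Rt A) t v \<longleftrightarrow> good A n (pre n t) v \<and> (t \<noteq> Leaf \<longrightarrow> v ! 0 \<in> Rt A)" for v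
        by (rule pre_tc(1)[rule_format])
      show ?thesis
        unfolding fnodes_from.simps froots_from.simps fc.simps good_append[OF b1 b2] g(1) ball_Un r1 r2 ih pt
        using True h(1) by auto
    qed
  qed
qed

lemma compatible_fc: "compatible A f w \<longleftrightarrow> fc A f w"
proof -
  let ?L = "fnodes f"
  have len: "length ?L = fdeg f" using fnodes_facts[of 1 f] by (simp add: fnodes_def)
  have e1: "(\<forall>i. 1 \<le> i \<and> i \<le> fdeg f \<longrightarrow> w ! (i - 1) \<in> Dc A (dec f i)) \<longleftrightarrow>
      (\<forall>k<length ?L. w ! k \<in> Dc A (fst (?L ! k)))"
  proof
    assume H: "\<forall>i. 1 \<le> i \<and> i \<le> fdeg f \<longrightarrow> w ! (i - 1) \<in> Dc A (dec f i)"
    show "\<forall>k<length ?L. w ! k \<in> Dc A (fst (?L ! k))"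
    proof (intro allI impI)
      fix k assume "k < length ?L"
      then show "w ! k \<in> Dc A (fst (?L ! k))" using H[rule_format, of "Suc k"] len by (simp add: dec_def)
    qed
  next
    assume H: "\<forall>k<length ?L. w ! k \<in> Dc A (fst (?L ! k))"
    show "\<forall>i. 1 \<le> i \<and> i \<le> fdeg f \<longrightarrow> w ! (i - 1) \<in> Dc A (dec f i)"
    proof (intro allI impI)
      fix i assume i: "1 \<le> i \<and> i \<le> fdeg f"
      then have "i - 1 < length ?L" using len by arith
      then show "w ! (i - 1) \<in> Dc A (dec f i)" using H[rule_format, of "i - 1"] len by (simp add: dec_def)
    qed
  qed
  have e2: "(\<forall>i j i'. child f i j i' \<longrightarrow> Ar A j (w ! (i - 1)) (w ! (i' - 1))) \<longleftrightarrow>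
     (\<forall>k<length ?L. \<forall>j<length (snd (?L!k)). \<forall>i'. snd (?L!k)!j = Some i' \<longrightarrow> Ar A (Suc j) (w!k) (w!(i'-1)))"
  proof
    assume H: "\<forall>i j i'. child f i j i' \<longrightarrow> Ar A j (w ! (i - 1)) (w ! (i' - 1))"
    show "\<forall>k<length ?L. \<forall>j<length (snd (?L!k)). \<forall>i'. snd (?L!k)!j = Some i' \<longrightarrow> Ar A (Suc j) (w!k) (w!(i'-1))"
    proof (intro allI impI)
      fix k j i' assume "k < length ?L" "j < length (snd (?L!k))" "snd (?L!k)!j = Some i'"
      then have "child f (Suc k) (Suc j) i'" using len by (simp add: child_def)
      then show "Ar A (Suc j) (w!k) (w!(i'-1))" using H by fastforce
    qed
  next
    assume H: "\<forall>k<length ?L. \<forall>j<length (snd (?L!k)). \<forall>i'. snd (?L!k)!j = Some i' \<longrightarrow> Ar A (Suc j) (w!k) (w!(i'-1))"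
    show "\<forall>i j i'. child f i j i' \<longrightarrow> Ar A j (w ! (i - 1)) (w ! (i' - 1))"
    proof (intro allI impI)
      fix i j i' assume c: "child f i j i'"
      then have "i - 1 < length ?L" "j - 1 < length (snd (?L!(i-1)))" "snd (?L!(i-1))!(j-1) = Some i'" "Suc (j - 1) = j"
        using len by (auto simp: child_def)
      then show "Ar A j (w ! (i - 1)) (w ! (i' - 1))" using H by metis
    qed
  qed
  have "fc A f w \<longleftrightarrow> good A 1 ?L w \<and> (\<forall>i\<in>froots f. w!(i-1) \<in> Rt A)"
    using fnodes_fc[where A=A and f=f and n=1] by (simp add: fnodes_def froots_def)
  also have "\<dots> \<longleftrightarrow> compatible A f w"
    unfolding compatible_def good_def e1 e2 len by auto
  finally show ?thesis by simp
qed


fun unassoc :: "'a + ('b + 'c) \<Rightarrow> ('a + 'b) + 'c" where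
  "unassoc (Inl a) = Inl (Inl a)"
| "unassoc (Inr (Inl b)) = Inl (Inr b)"
| "unassoc (Inr (Inr c)) = Inr c"

lemma un_sa[simp]: "unassoc (sum_assoc x) = x"
  by (cases x rule: sum_assoc.cases) auto

lemma sa_un[simp]: "sum_assoc (unassoc b) = b"
  by (cases b rule: unassoc.cases) auto

lemma sum_assoc_iff: "(b = sum_assoc x) \<longleftrightarrow> (x = unassoc b)"
  by (cases x rule: sum_assoc.cases; cases b rule: unassoc.cases; auto)

lemma part_i:
  "fla_map sum_assoc (fla_sum (fla_sum A1 A2) A3) = fla_sum A1 (fla_sum A2 A3)"
proof -
  have im: "sum_assoc ` X = unassoc -` X" for X
  proof
    show "sum_assoc ` X \<subseteq> unassoc -` X" by auto
    show "unassoc -` X \<subseteq> sum_assoc ` X"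
    proof
      fix b assume "b \<in> unassoc -` X"
      then show "b \<in> sum_assoc ` X" by (metis imageI sa_un vimageD)
    qed
  qed
  have ar: "(\<exists>x x'. b = sum_assoc x \<and> b' = sum_assoc x' \<and> R x x') \<longleftrightarrow> R (unassoc b) (unassoc b')"
    for b b' R
    using sum_assoc_iff by metis
  have c: "sum_assoc ` (Inl ` (Inl ` X \<union> Inr ` Y) \<union> Inr ` Z) = Inl ` X \<union> Inr ` (Inl ` Y \<union> Inr ` Z)"
    for X Y Z
    unfolding im by (rule set_eqI, rename_tac b, case_tac b rule: unassoc.cases) auto
  have a: "(\<lambda>j b b'. \<exists>x x'. b = sum_assoc x \<and> b' = sum_assoc x' \<and> Ar (fla_sum (fla_sum A1 A2) A3) j x x')
     = Ar (fla_sum A1 (fla_sum A2 A3))"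
  proof (intro ext)
    fix j b b'
    have "(\<exists>x x'. b = sum_assoc x \<and> b' = sum_assoc x' \<and> Ar (fla_sum (fla_sum A1 A2) A3) j x x')
       \<longleftrightarrow> Ar (fla_sum (fla_sum A1 A2) A3) j (unassoc b) (unassoc b')" by (metis sa_un un_sa)
    also have "\<dots> \<longleftrightarrow> Ar (fla_sum A1 (fla_sum A2 A3)) j b b'"
      by (cases b rule: unassoc.cases; cases b' rule: unassoc.cases) (auto simp: fla_sum_def)
    finally show "(\<exists>x x'. b = sum_assoc x \<and> b' = sum_assoc x' \<and> Ar (fla_sum (fla_sum A1 A2) A3) j x x')
       = Ar (fla_sum A1 (fla_sum A2 A3)) j b b'" .
  qed
  show ?thesis unfolding fla_map_def
    apply (rule fla.equality)
        apply (simp add: fla_sum_def c)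
       apply (simp add: fla_sum_def c)
      apply (simp add: fla_sum_def c)
     apply (simp only: fla.select_convs a)
    apply simp
    done
qed


lemma fc_append: "fc A (f1 @ f2) w \<longleftrightarrow> fc A f1 (take (fdeg f1) w) \<and> fc A f2 (drop (fdeg f1) w)"
proof (induction f1 arbitrary: w)
  case Nil
  then show ?case by simp
next
  case (Cons t f1)
  have e1: "take (deg t) (take (deg t + fdeg f1) w) = take (deg t) w" by (simp add: min_def)
  have e2: "drop (deg t) (take (deg t + fdeg f1) w) = take (fdeg f1) (drop (deg t) w)" by (simp add: drop_take)
  have e3: "drop (fdeg f1) (drop (deg t) w) = drop (deg t + fdeg f1) w" by (simp add: add.commute)
  show ?case using Cons.IH[of "drop (deg t) w"] by (simp add: e1 e2 conj_assoc add.commute)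
qed

lemma r_basis_append:
  "r_basis A (f1 @ f2) w = (\<Sum>i\<le>length w. r_basis A f1 (take i w) * r_basis A f2 (drop i w))"
proof -
  let ?k = "fdeg f1"
  have z: "r_basis A f1 (take i w) * r_basis A f2 (drop i w) =
      (if i = ?k then r_basis A f1 (take ?k w) * r_basis A f2 (drop ?k w) else 0)" if "i \<le> length w" for i
  proof (cases "i = ?k")
    case False
    have "\<not> fc A f1 (take i w)"
    proof
      assume "fc A f1 (take i w)"
      then have "length (take i w) = ?k" by (rule fc_length)
      then show False using False that by simp
    qed
    then show ?thesis using False by (simp add: r_basis_def compatible_fc)
  qed simp
  have "(\<Sum>i\<le>length w. r_basis A f1 (take i w) * r_basis A f2 (drop i w)) =
      (\<Sum>i\<le>length w. (if i = ?k then r_basis A f1 (take ?k w) * r_basis A f2 (drop ?k w) else 0))"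
    by (rule sum.cong) (auto simp: z)
  also have "\<dots> = (if ?k \<le> length w then r_basis A f1 (take ?k w) * r_basis A f2 (drop ?k w) else 0)"
    by (simp add: sum.delta)
  also have "\<dots> = r_basis A (f1 @ f2) w"
  proof (cases "?k \<le> length w")
    case False
    have "\<not> fc A f1 (take ?k w)"
    proof
      assume "fc A f1 (take ?k w)"
      then have "length (take ?k w) = ?k" by (rule fc_length)
      then show False using False by simp
    qed
    then show ?thesis using False by (simp add: r_basis_def compatible_fc fc_append)
  qed (simp add: r_basis_def compatible_fc fc_append)
  finally show ?thesis by (rule sym)
qed

lemma rmap_mult:
  fixes x y :: "'s forest \<Rightarrow> 'k::field_char_0"
  assumes fx: "finite {f. x f \<noteq> 0}" and fy: "finite {f. y f \<noteq> 0}"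
  shows "r_map A (N_mult x y) w = poly_mult (r_map A x) (r_map A y) w"
proof -
  let ?X = "{f. x f \<noteq> 0}" and ?Y = "{f. y f \<noteq> 0}"
  let ?P = "?X \<times> ?Y"
  define cat :: "'s forest \<times> 's forest \<Rightarrow> 's forest" where "cat p = fst p @ snd p" for p
  have fP: "finite ?P" using fx fy by simp
  have C: "N_mult x y h = (\<Sum>p\<in>{p\<in>?P. cat p = h}. x (fst p) * y (snd p))" for h
  proof -
    let ?sp = "\<lambda>i. (take i h, drop i h)"
    have inj: "inj_on ?sp {..length h}"
    proof (rule inj_onI)
      fix i i' assume "i \<in> {..length h}" "i' \<in> {..length h}" "?sp i = ?sp i'"
      then show "i = i'" by (metis atMost_iff fst_conv length_take min.absorb2)
    qed
    have im: "?sp ` {..length h} = {p. cat p = h}"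
    proof
      show "?sp ` {..length h} \<subseteq> {p. cat p = h}" by (auto simp: cat_def)
      show "{p. cat p = h} \<subseteq> ?sp ` {..length h}"
      proof
        fix p assume "p \<in> {p. cat p = h}"
        then have "fst p @ snd p = h" by (simp add: cat_def)
        then have "p = ?sp (length (fst p))" "length (fst p) \<in> {..length h}" by (auto simp: prod_eq_iff)
        then show "p \<in> ?sp ` {..length h}" by blast
      qed
    qed
    have "N_mult x y h = (\<Sum>i\<in>{..length h}. x (fst (?sp i)) * y (snd (?sp i)))" by (simp add: N_mult_def)
    also have "\<dots> = (\<Sum>p\<in>?sp ` {..length h}. x (fst p) * y (snd p))"
      by (rule sum.reindex[OF inj, symmetric, unfolded comp_def])
    also have "\<dots> = (\<Sum>p\<in>{p. cat p = h}. x (fst p) * y (snd p))" using im by simp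
    also have "\<dots> = (\<Sum>p\<in>{p\<in>?P. cat p = h}. x (fst p) * y (snd p))"
    proof (rule sum.mono_neutral_right)
      have "finite (?sp ` {..length h})" by simp
      then show "finite {p. cat p = h}" unfolding im .
    qed auto
    finally show ?thesis .
  qed
  have sub: "{h. N_mult x y h \<noteq> 0} \<subseteq> cat ` ?P"
  proof
    fix h assume "h \<in> {h. N_mult x y h \<noteq> 0}"
    then have "(\<Sum>p\<in>{p\<in>?P. cat p = h}. x (fst p) * y (snd p)) \<noteq> 0" using C by simp
    then obtain p where "p \<in> {p\<in>?P. cat p = h}" by (meson sum.neutral)
    then show "h \<in> cat ` ?P" by blast
  qed
  have "r_map A (N_mult x y) w = (\<Sum>h\<in>{h. N_mult x y h \<noteq> 0}. N_mult x y h * r_basis A h w)"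
    by (simp add: r_map_def)
  also have "\<dots> = (\<Sum>h\<in>cat ` ?P. N_mult x y h * r_basis A h w)"
    by (rule sum.mono_neutral_left) (use fP sub in auto)
  also have "\<dots> = (\<Sum>h\<in>cat ` ?P. \<Sum>p\<in>{p\<in>?P. cat p = h}. x (fst p) * y (snd p) * r_basis A (cat p) w)"
    by (rule sum.cong) (auto simp: C sum_distrib_right)
  also have "\<dots> = (\<Sum>p\<in>?P. x (fst p) * y (snd p) * r_basis A (cat p) w)"
    by (rule sum.group) (use fP in auto)
  also have "\<dots> = (\<Sum>a\<in>?X. \<Sum>b\<in>?Y. x a * y b * r_basis A (a @ b) w)"
    by (simp add: sum.cartesian_product cat_def split_def)
  also have "\<dots> = (\<Sum>a\<in>?X. \<Sum>b\<in>?Y. \<Sum>i\<le>length w. (x a * r_basis A a (take i w)) * (y b * r_basis A b (drop i w)))"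
    by (simp add: r_basis_append sum_distrib_left mult_ac)
  also have "\<dots> = (\<Sum>i\<le>length w. \<Sum>a\<in>?X. \<Sum>b\<in>?Y. (x a * r_basis A a (take i w)) * (y b * r_basis A b (drop i w)))"
    apply (subst sum.swap)
    apply (rule sum.swap)
    done
  also have "\<dots> = poly_mult (r_map A x) (r_map A y) w"
    by (simp add: poly_mult_def r_map_def sum_product)
  finally show ?thesis .
qed

lemma compat_props: "compatible A f w \<Longrightarrow> length w = fdeg f \<and> set w \<subseteq> carrier A"
  by (simp add: compatible_def)

lemma rmap_nz: "r_map A x w \<noteq> 0 \<Longrightarrow> \<exists>f. x f \<noteq> 0 \<and> compatible A f w"
proof -
  assume "r_map A x w \<noteq> 0"
  then have "(\<Sum>f\<in>{f. x f \<noteq> 0}. x f * r_basis A f w) \<noteq> 0" by (simp add: r_map_def)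
  then obtain f where "f \<in> {f. x f \<noteq> 0}" "x f * r_basis A f w \<noteq> 0" by (meson sum.neutral)
  then show ?thesis by (auto simp: r_basis_def split: if_splits)
qed

lemma part_ii:
  fixes A :: "('s, 'a) fla"
  shows "(\<forall>x :: 's forest \<Rightarrow> 'k::field_char_0. N_elem S ar x \<longrightarrow> kpoly A (r_map A x))
      \<and> r_map A (N_unit :: 's forest \<Rightarrow> 'k) = poly_one
      \<and> (\<forall>x y :: 's forest \<Rightarrow> 'k. N_elem S ar x \<longrightarrow> N_elem S ar y \<longrightarrow>
           r_map A (N_mult x y) = poly_mult (r_map A x) (r_map A y))
      \<and> (\<forall>(x :: 's forest \<Rightarrow> 'k) n. N_elem S ar x \<longrightarrow> N_homog n x \<longrightarrow>
           poly_homog n (r_map A x))"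
proof (intro conjI allI impI)
  fix x :: "'s forest \<Rightarrow> 'k" assume N: "N_elem S ar x"
  then have fx: "finite {f. x f \<noteq> 0}" by (simp add: N_elem_def)
  show "kpoly A (r_map A x)" unfolding kpoly_def
  proof (intro conjI allI impI exI)
    fix w assume "r_map A x w \<noteq> 0"
    then obtain f where "x f \<noteq> 0" "compatible A f w" using rmap_nz by blast
    then show "set w \<subseteq> carrier A" using compat_props by blast
  next
    fix w assume "r_map A x w \<noteq> 0"
    then obtain f where f: "x f \<noteq> 0" "compatible A f w" using rmap_nz by blast
    then have "length w = fdeg f" using compat_props by blast
    also have "\<dots> \<le> (\<Sum>g\<in>{f. x f \<noteq> 0}. fdeg g)" by (rule member_le_sum) (use f fx in auto)
    finally show "length w \<le> (\<Sum>g\<in>{f. x f \<noteq> 0}. fdeg g)" .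
  qed
next
  show "r_map A (N_unit :: 's forest \<Rightarrow> 'k) = poly_one"
  proof
    fix w
    have "{f. (N_unit :: 's forest \<Rightarrow> 'k) f \<noteq> 0} = {[]}" by (auto simp: N_unit_def basisE_def)
    then show "r_map A (N_unit :: 's forest \<Rightarrow> 'k) w = poly_one w"
      by (simp add: r_map_def N_unit_def basisE_def r_basis_def compatible_fc poly_one_def)
  qed
next
  fix x y :: "'s forest \<Rightarrow> 'k" assume "N_elem S ar x" "N_elem S ar y"
  then show "r_map A (N_mult x y) = poly_mult (r_map A x) (r_map A y)"
    by (intro ext rmap_mult) (auto simp: N_elem_def)
next
  fix x :: "'s forest \<Rightarrow> 'k" and n assume "N_elem S ar x" "N_homog n x"
  then show "poly_homog n (r_map A x)"
    unfolding poly_homog_def N_homog_def using rmap_nz compat_props by metis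
qed


fun ctw :: "nat list \<Rightarrow> 's tm \<Rightarrow> ('s \<times> nat list) list"
and ctwl :: "nat list \<Rightarrow> nat \<Rightarrow> 's tm list \<Rightarrow> ('s \<times> nat list) list" where
  "ctw u Leaf = []"
| "ctw u (Node s ts) = (s, u) # ctwl u 1 ts"
| "ctwl u j [] = []"
| "ctwl u j (t # ts) = ctw (u @ [j]) t @ ctwl u (Suc j) ts"

definition cw :: "'s forest \<Rightarrow> ('s \<times> nat list) list" where
  "cw f = concat (map (ctw []) f)"

lemma ctw_len:
  fixes t :: "'s tm" and ts :: "'s tm list"
  shows "length (ctw u t) = deg t" "length (ctwl u j ts) = sum_list (map deg ts)"
  by (induction u t and u j ts rule: ctw_ctwl.induct) auto

lemma ctw_pos:
  fixes t :: "'s tm" and ts :: "'s tm list"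
  shows "\<forall>x\<in>set (ctw u t). \<exists>r. snd x = u @ r"
    "\<forall>x\<in>set (ctwl u j ts). \<exists>j'\<ge>j. \<exists>r. snd x = u @ [j'] @ r"
proof (induction u t and u j ts rule: ctw_ctwl.induct)
  case (2 u s ts)
  then show ?case by fastforce
next
  case (4 u j t ts)
  show ?case
  proof
    fix x assume "x \<in> set (ctwl u j (t # ts))"
    then have "x \<in> set (ctw (u @ [j]) t) \<or> x \<in> set (ctwl u (Suc j) ts)" by simp
    then show "\<exists>j'\<ge>j. \<exists>r. snd x = u @ [j'] @ r"
    proof
      assume "x \<in> set (ctw (u @ [j]) t)"
      then obtain r where "snd x = (u @ [j]) @ r" using 4 by blast
      then show ?thesis by auto
    next
      assume "x \<in> set (ctwl u (Suc j) ts)"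
      then obtain j' r where "j' \<ge> Suc j" "snd x = u @ [j'] @ r" using 4 by blast
      then show ?thesis by (intro exI[of _ j']) auto
    qed
  qed
qed auto

lemma Apos_simps:
  "x \<in> carrier (A_pos S) \<longleftrightarrow> fst x \<in> S"
  "x \<in> Rt (A_pos S) \<longleftrightarrow> fst x \<in> S \<and> (\<exists>l. snd x = replicate l 0)"
  "x \<in> Dc (A_pos S) s \<longleftrightarrow> s \<in> S \<and> fst x = s"
  "Ar (A_pos S) j a x \<longleftrightarrow> fst a \<in> S \<and> fst x \<in> S \<and> (\<exists>l. snd x = snd a @ [j] @ replicate l 0)"
  by (cases x; cases a; auto simp: A_pos_def)+

lemma ctw_exist:
  fixes t :: "'s tm" and ts :: "'s tm list"
  shows "wf_tm S ar t \<longrightarrow> (\<forall>s ts'. t = Node s ts' \<longrightarrow> P (s, u)) \<longrightarrow> tc (A_pos S) P t (ctw u t)"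
    "(\<forall>t\<in>set ts. wf_tm S ar t) \<longrightarrow> s \<in> S \<longrightarrow> tcl (A_pos S) (s, u) j ts (ctwl u j ts)"
proof (induction u t and u j ts arbitrary: P and s rule: ctw_ctwl.induct)
  case (2 u s' ts)
  then show ?case by (auto simp: Apos_simps)
next
  case (4 u j t ts)
  show ?case
  proof (intro impI)
    assume w: "\<forall>t\<in>set (t # ts). wf_tm S ar t" and s: "s \<in> S"
    have l: "take (deg t) (ctw (u @ [j]) t @ ctwl u (Suc j) ts) = ctw (u @ [j]) t"
            "drop (deg t) (ctw (u @ [j]) t @ ctwl u (Suc j) ts) = ctwl u (Suc j) ts"
      using ctw_len(1)[of "u @ [j]" t] by auto
    have pr: "\<forall>s'. (\<exists>ts'. t = Node s' ts') \<longrightarrow> Ar (A_pos S) j (s, u) (s', u @ [j])"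
    proof (intro allI impI)
      fix s' assume "\<exists>ts'. t = Node s' ts'"
      then have "s' \<in> S" using w by auto
      then show "Ar (A_pos S) j (s, u) (s', u @ [j])" using s
        unfolding Apos_simps by (auto intro: exI[of _ 0])
    qed
    have "tc (A_pos S) (Ar (A_pos S) j (s, u)) t (ctw (u @ [j]) t)"
      using 4(1)[of "Ar (A_pos S) j (s, u)"] pr w by auto
    moreover have "tcl (A_pos S) (s, u) (Suc j) ts (ctwl u (Suc j) ts)" using 4(2) w s by auto
    ultimately show "tcl (A_pos S) (s, u) j (t # ts) (ctwl u j (t # ts))" by (simp add: ctw_len)
  qed
qed auto

lemma cw_exist: "wf_forest S ar f \<Longrightarrow> fc (A_pos S) f (cw f)"
proof (induction f)
  case (Cons t f)
  have l: "take (deg t) (ctw [] t @ cw f) = ctw [] t" "drop (deg t) (ctw [] t @ cw f) = cw f"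
    using ctw_len(1)[of "[]" t] by auto
  have "tc (A_pos S) (\<lambda>a. a \<in> Rt (A_pos S)) t (ctw [] t)"
    using ctw_exist(1)[of S ar t "\<lambda>a. a \<in> Rt (A_pos S)" "[]"] Cons.prems
    by (auto simp: wf_forest_def Apos_simps intro: exI[of _ 0])
  then show ?case using Cons by (simp add: cw_def wf_forest_def ctw_len)
qed (simp add: cw_def)

lemma prefix_prop:
  fixes A :: "('s, 'x \<times> nat list) fla"
  shows "tc A P g w \<Longrightarrow> \<forall>j a x. Ar A j a x \<longrightarrow> (\<exists>r. snd x = snd a @ [j] @ r) \<Longrightarrow> \<forall>p. (\<forall>x. P x \<longrightarrow> (\<exists>r. snd x = p @ r)) \<longrightarrow> (\<forall>x\<in>set w. \<exists>r. snd x = p @ r)"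
    "tcl A a j gs w \<Longrightarrow> \<forall>j a x. Ar A j a x \<longrightarrow> (\<exists>r. snd x = snd a @ [j] @ r) \<Longrightarrow> \<forall>x\<in>set w. \<exists>j'\<ge>j. \<exists>r. snd x = snd a @ [j'] @ r"
proof (induction A P g w and A a j gs w rule: tc_tcl.induct)
  case (2 A P s ts w)
  show ?case
  proof (cases w)
    case Nil then show ?thesis by simp
  next
    case (Cons b w')
    show ?thesis
    proof (intro allI impI ballI)
      fix p x assume hp: "\<forall>x. P x \<longrightarrow> (\<exists>r. snd x = p @ r)" and x: "x \<in> set w"
      have b: "P b" "tcl A b 1 ts w'" using 2(2) Cons by auto
      obtain r0 where r0: "snd b = p @ r0" using hp b(1) by blast
      show "\<exists>r. snd x = p @ r"
      proof (cases "x = b")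
        case True then show ?thesis using r0 by blast
      next
        case False
        then have "x \<in> set w'" using x Cons by simp
        then obtain j' r where "snd x = snd b @ [j'] @ r" using 2(1)[OF Cons b(2) 2(3)] by blast
        then show ?thesis using r0 by auto
      qed
    qed
  qed
next
  case (4 A a j t ts w)
  have t: "tc A (Ar A j a) t (take (deg t) w)" and ts: "tcl A a (Suc j) ts (drop (deg t) w)"
    using 4(3) by auto
  note HA = 4(4)
  show ?case
  proof
    fix x assume "x \<in> set w"
    then have "x \<in> set (take (deg t) w) \<or> x \<in> set (drop (deg t) w)"
      by (metis Un_iff append_take_drop_id set_append)
    then show "\<exists>j'\<ge>j. \<exists>r. snd x = snd a @ [j'] @ r"
    proof
      assume "x \<in> set (take (deg t) w)"
      moreover have "\<forall>x. Ar A j a x \<longrightarrow> (\<exists>r. snd x = (snd a @ [j]) @ r)"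
      proof (intro allI impI)
        fix x assume "Ar A j a x"
        then obtain r where "snd x = snd a @ [j] @ r" using HA by blast
        then show "\<exists>r. snd x = (snd a @ [j]) @ r" by simp
      qed
      ultimately obtain r where "snd x = (snd a @ [j]) @ r" using 4(1)[OF t HA] by blast
      then show ?thesis by auto
    next
      assume "x \<in> set (drop (deg t) w)"
      then obtain j' r where "j' \<ge> Suc j" "snd x = snd a @ [j'] @ r" using 4(2)[OF ts HA] by blast
      then show ?thesis by (intro exI[of _ j']) auto
    qed
  qed
qed auto

lemma HA_pos: "\<forall>j a x. Ar (A_pos S) j a x \<longrightarrow> (\<exists>r. snd x = snd a @ [j] @ r)"
proof (intro allI impI)
  fix j a x assume "Ar (A_pos S) j a x"
  then have "\<exists>l. snd x = snd a @ [j] @ replicate l 0" by (simp only: Apos_simps)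
  then show "\<exists>r. snd x = snd a @ [j] @ r" by blast
qed

lemma pfx_neq: "v @ [j] @ r = v @ [j'] @ r' \<Longrightarrow> j = j'"
  by simp

lemma tc_Leaf_word: "tc A P g [] \<Longrightarrow> g = Leaf"
  by (cases g) auto

lemma tc_Node_word: "tc A P (Node s ts) w \<Longrightarrow> \<exists>b w'. w = b # w' \<and> P b \<and> b \<in> Dc A s \<and> tcl A b 1 ts w'"
  by (cases w) auto

lemma tree_uniq:
  fixes t :: "'s tm"
  shows "wf_tm S ar t \<Longrightarrow> \<forall>g P v. tc (A_pos S) P g (ctw v t) \<longrightarrow> wf_tm S ar g \<longrightarrow> g = t"
proof (induction t)
  case Leaf
  then show ?case using tc_Leaf_word by fastforce
next
  case (Node s ts)
  show ?case
  proof (intro allI impI)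
    fix g P v assume tcg: "tc (A_pos S) P g (ctw v (Node s ts))" and wg: "wf_tm S ar g"
    obtain s' gs where g: "g = Node s' gs" using tcg by (cases g) auto
    from tc_Node_word[OF tcg[unfolded g]] obtain b w' where
      bw: "(s, v) # ctwl v 1 ts = b # w'" "b \<in> Dc (A_pos S) s'" "tcl (A_pos S) b 1 gs w'" by auto
    have ss: "s' = s" using bw by (auto simp: Apos_simps)
    have tl: "tcl (A_pos S) (s, v) 1 gs (ctwl v 1 ts)" using bw by auto
    have lg: "length gs = length ts" using wg Node.prems g ss by auto
    have inner: "\<forall>gs j. set ts' \<subseteq> set ts \<longrightarrow> length gs = length ts' \<longrightarrow> (\<forall>g\<in>set gs. wf_tm S ar g)
        \<longrightarrow> tcl (A_pos S) (s, v) j gs (ctwl v j ts') \<longrightarrow> gs = ts'" for ts'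
    proof (induction ts')
      case Nil
      then show ?case by auto
    next
      case (Cons t1 ts'')
      show ?case
      proof (intro allI impI)
        fix gs j assume sub: "set (t1 # ts'') \<subseteq> set ts" and lgs: "length gs = length (t1 # ts'')"
          and wgs: "\<forall>g\<in>set gs. wf_tm S ar g" and tcl1: "tcl (A_pos S) (s, v) j gs (ctwl v j (t1 # ts''))"
        obtain g1 gs' where gs: "gs = g1 # gs'" using lgs by (cases gs) auto
        define W where "W = ctwl v j (t1 # ts'')"
        define L where "L = deg t1"
        have W: "W = ctw (v @ [j]) t1 @ ctwl v (Suc j) ts''" by (simp add: W_def)
        have lc: "length (ctw (v @ [j]) t1) = L" by (simp add: ctw_len L_def)
        have tk: "tc (A_pos S) (Ar (A_pos S) j (s, v)) g1 (take (deg g1) W)"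
          and dr: "tcl (A_pos S) (s, v) (Suc j) gs' (drop (deg g1) W)"
          using tcl1 gs by (auto simp: W_def)
        have ltk: "length (take (deg g1) W) = deg g1" using tc_length(1)[OF tk] .
        have prem: "\<forall>x. Ar (A_pos S) j (s, v) x \<longrightarrow> (\<exists>r. snd x = (v @ [j]) @ r)"
          using HA_pos[of S] by auto
        have A1': "\<forall>x\<in>set (take (deg g1) W). \<exists>r. snd x = (v @ [j]) @ r"
          using prefix_prop(1)[OF tk HA_pos] prem by blast
        have A1: "\<forall>x\<in>set (take (deg g1) W). \<exists>r. snd x = v @ [j] @ r"
          using A1' by simp
        have A2: "\<forall>x\<in>set (drop (deg g1) W). \<exists>j'\<ge>Suc j. \<exists>r. snd x = v @ [j'] @ r"
          using prefix_prop(2)[OF dr HA_pos] by simp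
        have C1: "\<forall>x\<in>set (ctw (v @ [j]) t1). \<exists>r. snd x = v @ [j] @ r"
          using ctw_pos(1)[of "v @ [j]" t1] by auto
        have C2: "\<forall>x\<in>set (ctwl v (Suc j) ts''). \<exists>j'\<ge>Suc j. \<exists>r. snd x = v @ [j'] @ r"
          using ctw_pos(2) by blast
        have eq: "deg g1 = L"
        proof (rule ccontr)
          assume ne: "deg g1 \<noteq> L"
          show False
          proof (cases "deg g1 > L")
            case True
            have "deg g1 \<le> length W" using ltk by (simp add: min_def split: if_splits)
            then have "L < length W" using True by linarith
            then have "W ! L = ctwl v (Suc j) ts'' ! 0" "0 < length (ctwl v (Suc j) ts'')"
              using W lc by (auto simp: nth_append)
            then have m2: "W ! L \<in> set (ctwl v (Suc j) ts'')" by (metis nth_mem)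
            have "W ! L = take (deg g1) W ! L" using True by simp
            then have m1: "W ! L \<in> set (take (deg g1) W)" using ltk True by (metis nth_mem)
            obtain r where r: "snd (W ! L) = v @ [j] @ r" using A1 m1 by blast
            obtain j' r' where r': "j' \<ge> Suc j" "snd (W ! L) = v @ [j'] @ r'" using C2 m2 by blast
            show False using r r' pfx_neq[of v j r j' r'] by simp
          next
            case False
            then have lt: "deg g1 < L" using ne by simp
            then have "deg g1 < length W" using W lc by simp
            then have "W ! deg g1 = drop (deg g1) W ! 0" "0 < length (drop (deg g1) W)" by auto
            then have m2: "W ! deg g1 \<in> set (drop (deg g1) W)" by (metis nth_mem)
            have "W ! deg g1 = ctw (v @ [j]) t1 ! deg g1" using W lc lt by (simp add: nth_append)
            then have m1: "W ! deg g1 \<in> set (ctw (v @ [j]) t1)" using lc lt by (metis nth_mem)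
            obtain r where r: "snd (W ! deg g1) = v @ [j] @ r" using C1 m1 by blast
            obtain j' r' where r': "j' \<ge> Suc j" "snd (W ! deg g1) = v @ [j'] @ r'" using A2 m2 by blast
            show False using r r' pfx_neq[of v j r j' r'] by simp
          qed
        qed
        have tk2: "take (deg g1) W = ctw (v @ [j]) t1" using W lc eq by simp
        have dr2: "drop (deg g1) W = ctwl v (Suc j) ts''" using W lc eq by simp
        have "g1 = t1"
        proof -
          have "t1 \<in> set ts" using sub by simp
          then have "wf_tm S ar t1" using Node.prems by auto
          then show ?thesis using Node.IH[of t1] sub tk tk2 wgs gs by auto
        qed
        moreover have "gs' = ts''" using Cons.IH sub lgs wgs gs dr dr2 by auto
        ultimately show "gs = t1 # ts''" using gs by simp
      qed
    qed
    have "gs = ts" using inner[of ts] lg wg g tl by auto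
    then show "g = Node s ts" using g ss by simp
  qed
qed

lemma deg_Node_pos: "deg (Node s ts) > 0" by simp

lemma nz_of_tcl:
  "tcl (A_pos S) b 1 gs w \<Longrightarrow> x \<in> set w \<Longrightarrow> \<exists>y\<in>set (snd x). y \<noteq> 0"
proof -
  assume t: "tcl (A_pos S) b 1 gs w" and x: "x \<in> set w"
  obtain j' r where "j' \<ge> 1" "snd x = snd b @ [j'] @ r" using prefix_prop(2)[OF t HA_pos] x by blast
  then show ?thesis by auto
qed

lemma ctw_tail_nz:
  "0 < k \<Longrightarrow> k < length (ctw [] t) \<Longrightarrow> \<exists>y\<in>set (snd (ctw [] t ! k)). y \<noteq> 0"
proof (cases t)
  case (Node s ts)
  assume k: "0 < k" "k < length (ctw [] t)"
  then have "ctw [] t ! k = ctwl [] 1 ts ! (k - 1)" "k - 1 < length (ctwl [] 1 ts)" using Node by auto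
  then have "ctw [] t ! k \<in> set (ctwl [] 1 ts)" by (metis nth_mem)
  then obtain j' r where "j' \<ge> 1" "snd (ctw [] t ! k) = [] @ [j'] @ r" using ctw_pos(2) by blast
  then show ?thesis by auto
qed auto

lemma forest_uniq:
  "wf_forest S ar f \<Longrightarrow> reduced f \<Longrightarrow> \<forall>g. wf_forest S ar g \<longrightarrow> reduced g \<longrightarrow> fc (A_pos S) g (cw f) \<longrightarrow> g = f"
proof (induction f)
  case Nil
  show ?case
  proof (intro allI impI)
    fix g :: "'a forest" assume "wf_forest S ar g" "reduced g" "fc (A_pos S) g (cw [])"
    then show "g = []"
      by (cases g) (auto simp: cw_def reduced_def dest!: tc_Leaf_word)
  qed
next
  case (Cons f1 fs)
  obtain s ts where f1: "f1 = Node s ts" using Cons.prems by (cases f1) (auto simp: reduced_def)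
  show ?case
  proof (intro allI impI)
    fix g :: "'a forest" assume wg: "wf_forest S ar g" and rg: "reduced g" and fg: "fc (A_pos S) g (cw (f1 # fs))"
    define W where "W = cw (f1 # fs)"
    define L where "L = deg f1"
    have W: "W = ctw [] f1 @ cw fs" by (simp add: W_def cw_def)
    have lc: "length (ctw [] f1) = L" by (simp add: ctw_len L_def)
    have Lp: "0 < L" using f1 by (simp add: L_def)
    obtain g1 gs where g: "g = g1 # gs" using fg W Lp lc W_def by (cases g) auto
    obtain s' gs1 where g1: "g1 = Node s' gs1" using rg g by (cases g1) (auto simp: reduced_def)
    have tk: "tc (A_pos S) (\<lambda>a. a \<in> Rt (A_pos S)) g1 (take (deg g1) W)"
      and dr: "fc (A_pos S) gs (drop (deg g1) W)" using fg g W_def by auto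
    have ltk: "length (take (deg g1) W) = deg g1" using tc_length(1)[OF tk] .
    obtain b B' where bB: "take (deg g1) W = b # B'" "tcl (A_pos S) b 1 gs1 B'"
      using tc_Node_word[OF tk[unfolded g1]] g1 by auto
    have eq: "deg g1 = L"
    proof (rule ccontr)
      assume ne: "deg g1 \<noteq> L"
      show False
      proof (cases "deg g1 > L")
        case True
        have "deg g1 \<le> length W" using ltk by (simp add: min_def split: if_splits)
        then have "L < length W" using True by linarith
        then have "fs \<noteq> []" using W lc by (auto simp: cw_def)
        then obtain f2 fs' where fs: "fs = f2 # fs'" by (cases fs) auto
        obtain s2 ts2 where f2: "f2 = Node s2 ts2" using Cons.prems fs by (cases f2) (auto simp: reduced_def)
        have WL: "W ! L = (s2, [])" using W lc fs f2 by (simp add: cw_def nth_append)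
        have "W ! L = take (deg g1) W ! L" using True by simp
        also have "\<dots> = B' ! (L - 1)" using bB Lp by simp
        finally have "W ! L \<in> set B'" using ltk True bB Lp
          by (metis One_nat_def Suc_less_SucD Suc_pred length_Cons nth_mem)
        then have "\<exists>y\<in>set (snd (W ! L)). y \<noteq> 0" using nz_of_tcl[OF bB(2)] by blast
        then show False using WL by simp
      next
        case False
        then have lt: "deg g1 < L" using ne by simp
        have dp: "0 < deg g1" using g1 by simp
        have "deg g1 < length W" using W lc lt by simp
        then have d0: "drop (deg g1) W ! 0 = W ! deg g1" "drop (deg g1) W \<noteq> []" by auto
        obtain g2 gs' where gs: "gs = g2 # gs'" using dr d0(2) by (cases gs) auto
        have g2n: "g2 \<noteq> Leaf" using rg g gs by (auto simp: reduced_def)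
        obtain s2 gs2 where g2: "g2 = Node s2 gs2" using g2n by (cases g2) auto
        have "tc (A_pos S) (\<lambda>a. a \<in> Rt (A_pos S)) g2 (take (deg g2) (drop (deg g1) W))"
          using dr gs by simp
        from tc_Node_word[OF this[unfolded g2]] obtain c C where
          cC: "take (deg g2) (drop (deg g1) W) = c # C" "c \<in> Rt (A_pos S)" using g2 by auto
        have "c = drop (deg g1) W ! 0" using cC(1) by (metis nth_Cons_0 nth_take take_eq_Nil neq_Nil_conv
              zero_less_iff_neq_zero list.simps(3))
        then have c: "c = ctw [] f1 ! deg g1" using d0 W lc lt by (simp add: nth_append)
        have "\<exists>y\<in>set (snd c). y \<noteq> 0" using ctw_tail_nz[of "deg g1" f1] c dp lt lc by simp
        then show False using cC(2) by (auto simp: Apos_simps)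
      qed
    qed
    have tk2: "take (deg g1) W = ctw [] f1" using W lc eq by simp
    have dr2: "drop (deg g1) W = cw fs" using W lc eq by simp
    have "g1 = f1"
      using tree_uniq[of S ar f1] Cons.prems tk tk2 wg g by (auto simp: wf_forest_def)
    moreover have "gs = fs"
      using Cons.IH Cons.prems wg rg g dr dr2 by (auto simp: wf_forest_def reduced_def)
    ultimately show "g = f1 # fs" using g by simp
  qed
qed

lemma part_iv:
  fixes x y :: "'s forest \<Rightarrow> 'k::field_char_0"
  shows "N_elem S ar x \<longrightarrow> N_elem S ar y \<longrightarrow> r_map (A_pos S) x = r_map (A_pos S) y \<longrightarrow> x = y"
proof (intro impI ext)
  fix f assume Nx: "N_elem S ar x" and Ny: "N_elem S ar y" and r: "r_map (A_pos S) x = r_map (A_pos S) y"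
  have key: "r_map (A_pos S) z (cw f) = z f" if Nz: "N_elem S ar z" and wf: "wf_forest S ar f" "reduced f"
    for z :: "'s forest \<Rightarrow> 'k"
  proof -
    have "r_map (A_pos S) z (cw f) = (\<Sum>g\<in>{g. z g \<noteq> 0}. z g * r_basis (A_pos S) g (cw f))"
      by (simp add: r_map_def)
    also have "\<dots> = (\<Sum>g\<in>{g. z g \<noteq> 0}. (if g = f then z g else 0))"
    proof (rule sum.cong[OF refl])
      fix g assume "g \<in> {g. z g \<noteq> 0}"
      then have "wf_forest S ar g" "reduced g" using Nz by (auto simp: N_elem_def)
      then have "compatible (A_pos S) g (cw f) \<longleftrightarrow> g = f"
        using forest_uniq[OF wf] cw_exist[OF wf(1)] by (auto simp: compatible_fc)
      then show "z g * r_basis (A_pos S) g (cw f) = (if g = f then z g else 0)"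
        by (simp add: r_basis_def)
    qed
    also have "\<dots> = z f" using Nz by (simp add: sum.delta N_elem_def)
    finally show ?thesis .
  qed
  show "x f = y f"
  proof (cases "wf_forest S ar f \<and> reduced f")
    case True
    then show ?thesis using key[OF Nx] key[OF Ny] r by metis
  next
    case False
    then have "x f = 0" "y f = 0" using Nx Ny by (auto simp: N_elem_def)
    then show ?thesis by simp
  qed
qed


lemma fs_simps:
  "Inl a \<in> carrier (fla_sum A1 A2) \<longleftrightarrow> a \<in> carrier A1"
  "Inr b \<in> carrier (fla_sum A1 A2) \<longleftrightarrow> b \<in> carrier A2"
  "Inl a \<in> Rt (fla_sum A1 A2) \<longleftrightarrow> a \<in> Rt A1"
  "Inr b \<in> Rt (fla_sum A1 A2) \<longleftrightarrow> b \<in> Rt A2"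
  "Inl a \<in> Dc (fla_sum A1 A2) s \<longleftrightarrow> a \<in> Dc A1 s"
  "Inr b \<in> Dc (fla_sum A1 A2) s \<longleftrightarrow> b \<in> Dc A2 s"
  "Ar (fla_sum A1 A2) j (Inl a) (Inl a') \<longleftrightarrow> Ar A1 j a a'"
  "Ar (fla_sum A1 A2) j (Inl a) (Inr b) \<longleftrightarrow> a \<in> carrier A1 \<and> b \<in> Rt A2"
  "Ar (fla_sum A1 A2) j (Inr b) (Inl a) \<longleftrightarrow> False"
  "Ar (fla_sum A1 A2) j (Inr b) (Inr b') \<longleftrightarrow> Ar A2 j b b'"
  by (auto simp: fla_sum_def)

lemma restr_simps[simp]:
  "restr_l [] = []" "restr_r [] = []"
  "restr_l (Inl a # w) = a # restr_l w" "restr_l (Inr b # w) = restr_l w"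
  "restr_r (Inl a # w) = restr_r w" "restr_r (Inr b # w) = b # restr_r w"
  "restr_l (w1 @ w2) = restr_l w1 @ restr_l w2" "restr_r (w1 @ w2) = restr_r w1 @ restr_r w2"
  by (auto simp: restr_l_def restr_r_def)

lemma restr_map_Inr[simp]: "restr_l (map Inr v) = []" "restr_r (map Inr v) = v"
  by (induction v) auto

lemma restr_len1: "length (restr_l w) = length (filter id (map isl w))"
proof (induction w)
  case (Cons x w)
  then show ?case by (cases x) auto
qed auto

lemma restr_len2: "length (restr_r w) = length (filter Not (map isl w))"
proof (induction w)
  case (Cons x w)
  then show ?case by (cases x) auto
qed auto

lemmas restr_len = restr_len1 restr_len2

lemma all_Inr: "(\<forall>x\<in>set w. \<not> isl x) \<longleftrightarrow> w = map Inr (restr_r w)"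
proof (induction w)
  case (Cons x w)
  then show ?case by (cases x) auto
qed simp

lemma inr_tc:
  "A = fla_sum A1 A2 \<Longrightarrow> (\<forall>a. \<not> P (Inl a)) \<Longrightarrow> tc A P t w \<longleftrightarrow> (\<exists>v. w = map Inr v \<and> tc A2 (\<lambda>b. P (Inr b)) t v)"
  "A = fla_sum A1 A2 \<Longrightarrow> \<forall>b. a = Inr b \<longrightarrow> (tcl A a j ts w \<longleftrightarrow> (\<exists>v. w = map Inr v \<and> tcl A2 b j ts v))"
proof (induction A P t w and A a j ts w rule: tc_tcl.induct)
  case (2 A P s ts w)
  show ?case
  proof (cases w)
    case Nil then show ?thesis by auto
  next
    case (Cons c w')
    show ?thesis
    proof (cases c)
      case (Inl a)
      then show ?thesis using Cons 2(3) by auto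
    next
      case (Inr b)
      have ih: "tcl A c 1 ts w' \<longleftrightarrow> (\<exists>v. w' = map Inr v \<and> tcl A2 b 1 ts v)"
        using 2(1)[OF Cons 2(2)] Inr by blast
      show ?thesis unfolding Cons Inr using ih Inr 2(2)
        by (auto simp: fs_simps Cons_eq_map_conv)
    qed
  qed
next
  case (4 A a j t ts w)
  show ?case
  proof (intro allI impI)
    fix b assume ab: "a = Inr b"
    have ar: "(\<lambda>b'. Ar A j a (Inr b')) = Ar A2 j b" using ab 4(3) by (auto simp: fs_simps)
    have ih1: "tc A (Ar A j a) t v \<longleftrightarrow> (\<exists>v'. v = map Inr v' \<and> tc A2 (Ar A2 j b) t v')" if "v = take (deg t) w" for v
    proof -
      have nl: "\<forall>a'. \<not> Ar A j a (Inl a')" using ab 4(3) by (simp add: fs_simps)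
      show ?thesis using 4(1)[OF 4(3) nl] ar that by simp
    qed
    have ih2: "tcl A a (Suc j) ts v \<longleftrightarrow> (\<exists>v'. v = map Inr v' \<and> tcl A2 b (Suc j) ts v')" if "v = drop (deg t) w" for v
      unfolding that by (rule 4(2)[OF 4(3), rule_format, OF ab])
    show "tcl A a j (t # ts) w \<longleftrightarrow> (\<exists>v. w = map Inr v \<and> tcl A2 b j (t # ts) v)"
    proof
      assume "tcl A a j (t # ts) w"
      then obtain v1 v2 where v1: "take (deg t) w = map Inr v1" "tc A2 (Ar A2 j b) t v1"
        and v2: "drop (deg t) w = map Inr v2" "tcl A2 b (Suc j) ts v2"
        using ih1 ih2 by auto
      have l1: "length v1 = deg t" using tc_length(1)[OF v1(2)] .
      have "w = map Inr (v1 @ v2)" using v1(1) v2(1) by (metis append_take_drop_id map_append)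
      moreover have "tcl A2 b j (t # ts) (v1 @ v2)" using v1 v2 l1 by simp
      ultimately show "\<exists>v. w = map Inr v \<and> tcl A2 b j (t # ts) v" by blast
    next
      assume "\<exists>v. w = map Inr v \<and> tcl A2 b j (t # ts) v"
      then obtain v where v: "w = map Inr v" "tcl A2 b j (t # ts) v" by blast
      have "take (deg t) w = map Inr (take (deg t) v)" "drop (deg t) w = map Inr (drop (deg t) v)"
        using v(1) by (auto simp: take_map drop_map)
      then show "tcl A a j (t # ts) w" using v(2) ih1 ih2 by auto
    qed
  qed
qed auto


fun msk :: "'s tm \<Rightarrow> 's tm list \<Rightarrow> bool list"
and mskl :: "'s tm list \<Rightarrow> 's tm list \<Rightarrow> bool list" where
  "msk Leaf us = replicate (case us of [] \<Rightarrow> 0 | u # _ \<Rightarrow> deg u) False"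
| "msk (Node s ts) us = True # mskl ts us"
| "mskl [] us = []"
| "mskl (t # ts) us = msk t (take (nlv t) us) @ mskl ts (drop (nlv t) us)"

definition dmsk :: "'s tm \<times> 's tm list \<Rightarrow> bool list" where
  "dmsk d = msk (fst d) (snd d)"

fun spl :: "'s tm list \<Rightarrow> 'x list \<Rightarrow> 'x list list" where
  "spl [] us = []"
| "spl (t # ts) us = take (nlv t) us # spl ts (drop (nlv t) us)"

lemma msk_len:
  fixes t :: "'s tm" and ts :: "'s tm list"
  shows "length (msk t us) = deg (graft t us)" "length (mskl ts us) = sum_list (map deg (graftl ts us))"
  by (induction t us and ts us rule: msk_mskl.induct) (auto split: list.splits)

lemma msk_true:
  fixes t :: "'s tm" and ts :: "'s tm list"
  shows "length (filter id (msk t us)) = deg t" "length (filter id (mskl ts us)) = sum_list (map deg ts)"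
  by (induction t us and ts us rule: msk_mskl.induct) auto

lemma deg_graft:
  fixes t :: "'s tm" and ts :: "'s tm list"
  shows "length us = nlv t \<Longrightarrow> deg (graft t us) = deg t + sum_list (map deg us)"
    "length us = sum_list (map nlv ts) \<Longrightarrow> sum_list (map deg (graftl ts us)) = sum_list (map deg ts) + sum_list (map deg us)"
proof (induction t us and ts us rule: graft_graftl.induct)
  case (1 us)
  then obtain u where "us = [u]" by (cases us) auto
  then show ?case by simp
next
  case (4 t ts us)
  have l1: "length (take (nlv t) us) = nlv t" using 4(3) by simp
  have l2: "length (drop (nlv t) us) = sum_list (map nlv ts)" using 4(3) by simp
  have "sum_list (map deg us) = sum_list (map deg (take (nlv t) us)) + sum_list (map deg (drop (nlv t) us))"
    by (metis append_take_drop_id map_append sum_list_append)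
  then show ?case using 4(1)[OF l1] 4(2)[OF l2] by simp
qed auto

lemma spl_len: "length (spl ts us) = length ts"
  by (induction ts arbitrary: us) auto

lemma spl_concat: "length us = sum_list (map nlv ts) \<Longrightarrow> concat (spl ts us) = us"
  by (induction ts arbitrary: us) auto

lemma spl_lens: "length us = sum_list (map nlv ts) \<Longrightarrow> list_all2 (\<lambda>t u. length u = nlv t) ts (spl ts us)"
  by (induction ts arbitrary: us) auto

lemma graftl_spl: "graftl ts us = map (\<lambda>(t, u). graft t u) (zip ts (spl ts us))"
  by (induction ts arbitrary: us) auto

lemma mskl_spl: "mskl ts us = concat (map (\<lambda>(t, u). msk t u) (zip ts (spl ts us)))"
  by (induction ts arbitrary: us) auto

lemma spl_inv: "\<forall>d\<in>set ds. length (snd d) = nlv (fst d) \<Longrightarrow> spl (map fst ds) (concat (map snd ds)) = map snd ds"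
  by (induction ds) auto

lemma zip_fst_snd: "zip (map fst ds) (map snd ds) = ds"
  by (induction ds) auto

lemma decomps_iff: "d \<in> decomps S ar t \<longleftrightarrow> wf_tm S ar (fst d) \<and> (\<forall>u\<in>set (snd d). wf_tm S ar u)
   \<and> length (snd d) = nlv (fst d) \<and> graft (fst d) (snd d) = t"
  by (cases d) (simp add: decomps_def)

lemma dec_Leaf: "decomps S ar Leaf = {(Leaf, [Leaf])}"
proof
  show "decomps S ar Leaf \<subseteq> {(Leaf, [Leaf])}"
  proof
    fix d assume "d \<in> decomps S ar Leaf"
    then obtain t' us where d: "d = (t', us)" "length us = nlv t'" "graft t' us = Leaf"
      by (auto simp: decomps_def)
    then have t': "t' = Leaf" by (cases t') auto
    then obtain u where "us = [u]" using d by (cases us) auto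
    then show "d \<in> {(Leaf, [Leaf])}" using d t' by simp
  qed
  show "{(Leaf, [Leaf])} \<subseteq> decomps S ar Leaf" by (simp add: decomps_def)
qed

lemma dec_Node:
  assumes wf: "wf_tm S ar (Node s ts)"
  shows "d \<in> decomps S ar (Node s ts) \<longleftrightarrow> d = (Leaf, [Node s ts]) \<or>
     (\<exists>ds. list_all2 (\<lambda>d t. d \<in> decomps S ar t) ds ts \<and> d = (Node s (map fst ds), concat (map snd ds)))"
proof
  assume "d \<in> decomps S ar (Node s ts)"
  then obtain t' us where d: "d = (t', us)" "wf_tm S ar t'" "\<forall>u\<in>set us. wf_tm S ar u"
     "length us = nlv t'" "graft t' us = Node s ts"
    by (auto simp: decomps_def)
  show "d = (Leaf, [Node s ts]) \<or>
     (\<exists>ds. list_all2 (\<lambda>d t. d \<in> decomps S ar t) ds ts \<and> d = (Node s (map fst ds), concat (map snd ds)))"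
  proof (cases t')
    case Leaf
    then obtain u where "us = [u]" using d by (cases us) auto
    then show ?thesis using d Leaf by simp
  next
    case (Node s' ts')
    have ss: "s' = s" and gl: "graftl ts' us = ts" using d Node by auto
    have lus: "length us = sum_list (map nlv ts')" using d Node by simp
    define ds where "ds = zip ts' (spl ts' us)"
    have fst_ds: "map fst ds = ts'" and snd_ds: "map snd ds = spl ts' us"
      using spl_len[of ts' us] by (auto simp: ds_def)
    have lens: "list_all2 (\<lambda>t u. length u = nlv t) ts' (spl ts' us)" using spl_lens[OF lus] .
    have cat: "concat (map snd ds) = us" using snd_ds spl_concat[OF lus] by simp
    have gts: "ts = map (\<lambda>(t, u). graft t u) ds" using gl graftl_spl[of ts' us] by (simp add: ds_def)
    have wts': "\<forall>t\<in>set ts'. wf_tm S ar t" using d Node by simp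
    have "list_all2 (\<lambda>d t. d \<in> decomps S ar t) ds ts"
    proof (rule list_all2_all_nthI)
      show "length ds = length ts" using gts by simp
    next
      fix i assume i: "i < length ds"
      have di: "ds ! i = (ts' ! i, spl ts' us ! i)" using i spl_len[of ts' us] by (simp add: ds_def)
      have il: "i < length ts'" using i fst_ds by (metis length_map)
      have "spl ts' us ! i \<in> set (spl ts' us)" using il spl_len[of ts' us] by (metis nth_mem)
      then have "set (spl ts' us ! i) \<subseteq> set (concat (spl ts' us))" by auto
      then have "set (spl ts' us ! i) \<subseteq> set us" using spl_concat[OF lus] by simp
      moreover have "length (spl ts' us ! i) = nlv (ts' ! i)" using lens il by (simp add: list_all2_conv_all_nth)
      moreover have "ts ! i = graft (ts' ! i) (spl ts' us ! i)" using gts i di by simp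
      moreover have "wf_tm S ar (ts' ! i)" using wts' il by simp
      ultimately show "ds ! i \<in> decomps S ar (ts ! i)" using di d(3) by (auto simp: decomps_def)
    qed
    moreover have "d = (Node s (map fst ds), concat (map snd ds))" using d Node ss fst_ds cat by simp
    ultimately show ?thesis by blast
  qed
next
  assume "d = (Leaf, [Node s ts]) \<or>
     (\<exists>ds. list_all2 (\<lambda>d t. d \<in> decomps S ar t) ds ts \<and> d = (Node s (map fst ds), concat (map snd ds)))"
  then show "d \<in> decomps S ar (Node s ts)"
  proof
    assume "d = (Leaf, [Node s ts])"
    then show ?thesis using wf by (simp add: decomps_def)
  next
    assume "\<exists>ds. list_all2 (\<lambda>d t. d \<in> decomps S ar t) ds ts \<and> d = (Node s (map fst ds), concat (map snd ds))"
    then obtain ds where ds: "list_all2 (\<lambda>d t. d \<in> decomps S ar t) ds ts" and d: "d = (Node s (map fst ds), concat (map snd ds))"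
      by blast
    have mem: "\<forall>d\<in>set ds. wf_tm S ar (fst d) \<and> (\<forall>u\<in>set (snd d). wf_tm S ar u) \<and> length (snd d) = nlv (fst d)"
    proof
      fix d assume "d \<in> set ds"
      then obtain i where i: "i < length ds" "d = ds ! i" by (metis in_set_conv_nth)
      then have "d \<in> decomps S ar (ts ! i)" using ds list_all2_nthD by blast
      then show "wf_tm S ar (fst d) \<and> (\<forall>u\<in>set (snd d). wf_tm S ar u) \<and> length (snd d) = nlv (fst d)"
        by (simp add: decomps_iff)
    qed
    have L: "\<forall>d\<in>set ds. length (snd d) = nlv (fst d)" using mem by blast
    have lds: "length ds = length ts" using ds by (simp add: list_all2_lengthD)
    have gm: "map (\<lambda>d. graft (fst d) (snd d)) ds = ts"
      using ds by (induction ds ts rule: list_all2_induct) (auto simp: decomps_iff)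
    have g: "graftl (map fst ds) (concat (map snd ds)) = map (\<lambda>d. graft (fst d) (snd d)) ds"
      by (simp add: graftl_spl spl_inv[OF L] zip_fst_snd split_def)
    have ln: "length (concat (map snd ds)) = sum_list (map nlv (map fst ds))"
      using L by (induction ds) auto
    show ?thesis unfolding d decomps_iff using wf lds mem g gm ln by auto
  qed
qed

lemma dmsk_Node:
  assumes ds: "list_all2 (\<lambda>d t. d \<in> decomps S ar t) ds ts"
  shows "dmsk (Node s (map fst ds), concat (map snd ds)) = True # concat (map dmsk ds)"
proof -
  have L: "\<forall>d\<in>set ds. length (snd d) = nlv (fst d)"
  proof
    fix d assume "d \<in> set ds"
    then obtain i where i: "i < length ds" "d = ds ! i" by (metis in_set_conv_nth)
    then have "d \<in> decomps S ar (ts ! i)" using ds list_all2_nthD by blast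
    then show "length (snd d) = nlv (fst d)" by (simp add: decomps_iff)
  qed
  show ?thesis by (simp add: dmsk_def[abs_def] mskl_spl spl_inv[OF L] zip_fst_snd split_def)
qed

lemma dmsk_Leaf: "dmsk (Leaf, [t]) = replicate (deg t) False"
  by (simp add: dmsk_def)

lemma dmsk_props:
  assumes "d \<in> decomps S ar t"
  shows "length (dmsk d) = deg t" "length (filter id (dmsk d)) = deg (fst d)"
    "length (filter Not (dmsk d)) = fdeg (snd d)"
proof -
  have d: "length (snd d) = nlv (fst d)" "graft (fst d) (snd d) = t" using assms by (auto simp: decomps_iff)
  show l: "length (dmsk d) = deg t" using msk_len(1)[of "fst d" "snd d"] d by (simp add: dmsk_def)
  show t: "length (filter id (dmsk d)) = deg (fst d)" by (simp add: dmsk_def msk_true)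
  have "length (filter id (dmsk d)) + length (filter (\<lambda>x. \<not> id x) (dmsk d)) = length (dmsk d)"
    by (rule sum_length_filter_compl)
  moreover have "deg t = deg (fst d) + fdeg (snd d)" using deg_graft(1)[OF d(1)] d(2) by (simp add: fdeg_def)
  ultimately show "length (filter Not (dmsk d)) = fdeg (snd d)" using l t by simp
qed


abbreviation DR :: "'s set \<Rightarrow> ('s \<Rightarrow> nat) \<Rightarrow> ('s tm \<times> 's tm list) \<Rightarrow> 's tm \<Rightarrow> bool" where
  "DR S ar \<equiv> (\<lambda>d t. d \<in> decomps S ar t)"

lemma restr_take_l: "length (restr_l (take k w)) = length (filter id (take k (map isl w)))"
  by (simp add: restr_len take_map)

lemma restr_take_r: "length (restr_r (take k w)) = length (filter Not (take k (map isl w)))"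
  by (simp add: restr_len take_map)

lemma list_step:
  assumes H1: "\<forall>v. tc A P t v \<longleftrightarrow> (\<exists>d\<in>decomps S ar t. map isl v = dmsk d \<and> T1 (fst d) (restr_l v) \<and> fc A2 (snd d) (restr_r v))"
  and H2: "\<forall>v. L2 v \<longleftrightarrow> (\<exists>ds. list_all2 (DR S ar) ds ts \<and> map isl v = concat (map dmsk ds)
       \<and> L1 (map fst ds) (restr_l v) \<and> fc A2 (concat (map snd ds)) (restr_r v))"
  shows "(tc A P t (take (deg t) w) \<and> L2 (drop (deg t) w)) \<longleftrightarrow>
    (\<exists>d ds. d \<in> decomps S ar t \<and> list_all2 (DR S ar) ds ts \<and> map isl w = dmsk d @ concat (map dmsk ds)
       \<and> T1 (fst d) (take (deg (fst d)) (restr_l w)) \<and> L1 (map fst ds) (drop (deg (fst d)) (restr_l w))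
       \<and> fc A2 (snd d) (take (fdeg (snd d)) (restr_r w)) \<and> fc A2 (concat (map snd ds)) (drop (fdeg (snd d)) (restr_r w)))"
proof
  assume "tc A P t (take (deg t) w) \<and> L2 (drop (deg t) w)"
  then obtain d ds where d: "d \<in> decomps S ar t" "map isl (take (deg t) w) = dmsk d"
      "T1 (fst d) (restr_l (take (deg t) w))" "fc A2 (snd d) (restr_r (take (deg t) w))"
    and ds: "list_all2 (DR S ar) ds ts" "map isl (drop (deg t) w) = concat (map dmsk ds)"
      "L1 (map fst ds) (restr_l (drop (deg t) w))" "fc A2 (concat (map snd ds)) (restr_r (drop (deg t) w))"
    using H1 H2 by blast
  have w: "w = take (deg t) w @ drop (deg t) w" by simp
  have l1: "length (restr_l (take (deg t) w)) = deg (fst d)"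
    using d(2) dmsk_props[OF d(1)] by (simp add: restr_len)
  have r1: "length (restr_r (take (deg t) w)) = fdeg (snd d)"
    using d(2) dmsk_props[OF d(1)] by (simp add: restr_len)
  have rl: "restr_l w = restr_l (take (deg t) w) @ restr_l (drop (deg t) w)"
    using restr_simps(7)[of "take (deg t) w" "drop (deg t) w"] by simp
  have rr: "restr_r w = restr_r (take (deg t) w) @ restr_r (drop (deg t) w)"
    using restr_simps(8)[of "take (deg t) w" "drop (deg t) w"] by simp
  have mi: "map isl w = dmsk d @ concat (map dmsk ds)"
    using d(2) ds(2) by (metis w map_append)
  show "\<exists>d ds. d \<in> decomps S ar t \<and> list_all2 (DR S ar) ds ts \<and> map isl w = dmsk d @ concat (map dmsk ds)
       \<and> T1 (fst d) (take (deg (fst d)) (restr_l w)) \<and> L1 (map fst ds) (drop (deg (fst d)) (restr_l w))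
       \<and> fc A2 (snd d) (take (fdeg (snd d)) (restr_r w)) \<and> fc A2 (concat (map snd ds)) (drop (fdeg (snd d)) (restr_r w))"
    using d ds mi l1 r1 rl rr by (intro exI[of _ d] exI[of _ ds]) simp
next
  assume "\<exists>d ds. d \<in> decomps S ar t \<and> list_all2 (DR S ar) ds ts \<and> map isl w = dmsk d @ concat (map dmsk ds)
       \<and> T1 (fst d) (take (deg (fst d)) (restr_l w)) \<and> L1 (map fst ds) (drop (deg (fst d)) (restr_l w))
       \<and> fc A2 (snd d) (take (fdeg (snd d)) (restr_r w)) \<and> fc A2 (concat (map snd ds)) (drop (fdeg (snd d)) (restr_r w))"
  then obtain d ds where d: "d \<in> decomps S ar t" and ds: "list_all2 (DR S ar) ds ts"
    and mi: "map isl w = dmsk d @ concat (map dmsk ds)"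
    and c1: "T1 (fst d) (take (deg (fst d)) (restr_l w))" and c2: "L1 (map fst ds) (drop (deg (fst d)) (restr_l w))"
    and c3: "fc A2 (snd d) (take (fdeg (snd d)) (restr_r w))" and c4: "fc A2 (concat (map snd ds)) (drop (fdeg (snd d)) (restr_r w))"
    by blast
  have ld: "length (dmsk d) = deg t" using dmsk_props[OF d] by simp
  have m1: "map isl (take (deg t) w) = dmsk d" using mi ld by (simp add: take_map[symmetric])
  have m2: "map isl (drop (deg t) w) = concat (map dmsk ds)" using mi ld by (simp add: drop_map[symmetric])
  have w: "w = take (deg t) w @ drop (deg t) w" by simp
  have l1: "length (restr_l (take (deg t) w)) = deg (fst d)"
    using m1 dmsk_props[OF d] by (simp add: restr_len)
  have r1: "length (restr_r (take (deg t) w)) = fdeg (snd d)"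
    using m1 dmsk_props[OF d] by (simp add: restr_len)
  have rl: "restr_l w = restr_l (take (deg t) w) @ restr_l (drop (deg t) w)"
    using restr_simps(7)[of "take (deg t) w" "drop (deg t) w"] by simp
  have rr: "restr_r w = restr_r (take (deg t) w) @ restr_r (drop (deg t) w)"
    using restr_simps(8)[of "take (deg t) w" "drop (deg t) w"] by simp
  have "tc A P t (take (deg t) w)"
    using H1 d m1 c1 c3 l1 r1 rl rr by auto
  moreover have "L2 (drop (deg t) w)"
    using H2 ds m2 c2 c4 l1 r1 rl rr by auto
  ultimately show "tc A P t (take (deg t) w) \<and> L2 (drop (deg t) w)" by blast
qed


lemma fc_single: "fc A [t] v \<longleftrightarrow> tc A (\<lambda>a. a \<in> Rt A) t v"
proof
  assume "fc A [t] v"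
  then have "tc A (\<lambda>a. a \<in> Rt A) t (take (deg t) v)" "drop (deg t) v = []" by auto
  moreover have "take (deg t) v = v" using \<open>drop (deg t) v = []\<close> by simp
  ultimately show "tc A (\<lambda>a. a \<in> Rt A) t v" by simp
next
  assume h: "tc A (\<lambda>a. a \<in> Rt A) t v"
  then have "length v = deg t" by (rule tc_length)
  then show "fc A [t] v" using h by simp
qed

lemma map_isl_repl: "map isl w = replicate n False \<longleftrightarrow> length w = n \<and> w = map Inr (restr_r w)"
proof -
  have "map isl w = replicate n False \<longleftrightarrow> length w = n \<and> (\<forall>x\<in>set w. \<not> isl x)"
  proof (induction w arbitrary: n)
    case (Cons x w)
    then show ?case by (cases n) auto
  qed auto
  then show ?thesis using all_Inr by blast
qed

lemma prop_helper: "(R \<longleftrightarrow> D1 \<or> D2) \<Longrightarrow> \<not> D1 \<Longrightarrow> (D2 \<longleftrightarrow> X) \<Longrightarrow> (R \<longleftrightarrow> X)"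
  by blast

lemma ex_la2_Cons: "(\<exists>ds. list_all2 R ds (t # ts) \<and> F ds) \<longleftrightarrow> (\<exists>d ds'. R d t \<and> list_all2 R ds' ts \<and> F (d # ds'))"
  by (auto simp: list_all2_Cons2)

lemma core:
  fixes A1 :: "('s, 'a) fla" and A2 :: "('s, 'b) fla" and t :: "'s tm"
  shows "wf_tm S ar t \<Longrightarrow> \<forall>P Q c w. (\<forall>a. P (Inl a) = Q a) \<longrightarrow> (\<forall>b. P (Inr b) = (b \<in> Rt A2 \<and> c)) \<longrightarrow>
     (tc (fla_sum A1 A2) P t w \<longleftrightarrow> (\<exists>d\<in>decomps S ar t. map isl w = dmsk d \<and> tc A1 Q (fst d) (restr_l w)
        \<and> fc A2 (snd d) (restr_r w) \<and> (fst d = Leaf \<longrightarrow> t \<noteq> Leaf \<longrightarrow> c)))"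
proof (induction t)
  case Leaf
  then show ?case by (auto simp: dec_Leaf dmsk_def)
next
  case (Node s ts)
  let ?A = "fla_sum A1 A2"
  have wts: "\<forall>t\<in>set ts. wf_tm S ar t" using Node.prems by simp
  have CL: "\<forall>j a w. a \<in> carrier A1 \<longrightarrow> (tcl ?A (Inl a) j ts' w \<longleftrightarrow> (\<exists>ds. list_all2 (DR S ar) ds ts'
       \<and> map isl w = concat (map dmsk ds) \<and> tcl A1 a j (map fst ds) (restr_l w)
       \<and> fc A2 (concat (map snd ds)) (restr_r w)))" if "set ts' \<subseteq> set ts" for ts'
    using that
  proof (induction ts')
    case Nil
    then show ?case by auto
  next
    case (Cons t1 ts'')
    show ?case
    proof (intro allI impI)
      fix j a w assume ac: "a \<in> carrier A1"
      have t1: "t1 \<in> set ts" "wf_tm S ar t1" using Cons.prems wts by auto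
      have H1: "\<forall>v. tc ?A (Ar ?A j (Inl a)) t1 v \<longleftrightarrow> (\<exists>d\<in>decomps S ar t1. map isl v = dmsk d
          \<and> tc A1 (Ar A1 j a) (fst d) (restr_l v) \<and> fc A2 (snd d) (restr_r v))"
      proof -
        have p1: "\<forall>a'. Ar ?A j (Inl a) (Inl a') = Ar A1 j a a'" by (simp add: fs_simps)
        have p2: "\<forall>b. Ar ?A j (Inl a) (Inr b) = (b \<in> Rt A2 \<and> True)" using ac by (simp add: fs_simps)
        show ?thesis using Node.IH[OF t1(1) t1(2), rule_format, where P="Ar ?A j (Inl a)" and Q="Ar A1 j a" and c=True, OF p1[rule_format] p2[rule_format]] by simp
      qed
      have H2: "\<forall>v. tcl ?A (Inl a) (Suc j) ts'' v \<longleftrightarrow> (\<exists>ds. list_all2 (DR S ar) ds ts''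
          \<and> map isl v = concat (map dmsk ds) \<and> tcl A1 a (Suc j) (map fst ds) (restr_l v)
          \<and> fc A2 (concat (map snd ds)) (restr_r v))"
        using Cons.IH Cons.prems ac by auto
      show "tcl ?A (Inl a) j (t1 # ts'') w \<longleftrightarrow> (\<exists>ds. list_all2 (DR S ar) ds (t1 # ts'')
          \<and> map isl w = concat (map dmsk ds) \<and> tcl A1 a j (map fst ds) (restr_l w)
          \<and> fc A2 (concat (map snd ds)) (restr_r w))"
        unfolding tcl.simps(2) list_step[OF H1 H2] ex_la2_Cons
        by (simp add: fc_append conj_assoc)
    qed
  qed
  show ?case
  proof (intro allI impI)
    fix P :: "'a + 'b \<Rightarrow> bool" and Q :: "'a \<Rightarrow> bool" and c :: bool and w :: "('a + 'b) list"
    assume hQ: "\<forall>a. P (Inl a) = Q a" and hc: "\<forall>b. P (Inr b) = (b \<in> Rt A2 \<and> c)"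
    let ?R = "\<exists>d\<in>decomps S ar (Node s ts). map isl w = dmsk d \<and> tc A1 Q (fst d) (restr_l w)
        \<and> fc A2 (snd d) (restr_r w) \<and> (fst d = Leaf \<longrightarrow> Node s ts \<noteq> Leaf \<longrightarrow> c)"
    have dec: "d \<in> decomps S ar (Node s ts) \<longleftrightarrow> d = (Leaf, [Node s ts]) \<or>
     (\<exists>ds. list_all2 (DR S ar) ds ts \<and> d = (Node s (map fst ds), concat (map snd ds)))" for d
      by (rule dec_Node[OF Node.prems])
    have R: "?R \<longleftrightarrow> (map isl w = replicate (deg (Node s ts)) False \<and> fc A2 [Node s ts] (restr_r w) \<and> c
        \<and> restr_l w = [])
      \<or> (\<exists>ds. list_all2 (DR S ar) ds ts \<and> map isl w = True # concat (map dmsk ds)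
          \<and> tc A1 Q (Node s (map fst ds)) (restr_l w) \<and> fc A2 (concat (map snd ds)) (restr_r w))"
    proof
      assume ?R
      then obtain d where d: "d \<in> decomps S ar (Node s ts)" "map isl w = dmsk d" "tc A1 Q (fst d) (restr_l w)"
        "fc A2 (snd d) (restr_r w)" "fst d = Leaf \<longrightarrow> c" by auto
      from d(1)[unfolded dec] show "(map isl w = replicate (deg (Node s ts)) False \<and> fc A2 [Node s ts] (restr_r w) \<and> c
        \<and> restr_l w = [])
      \<or> (\<exists>ds. list_all2 (DR S ar) ds ts \<and> map isl w = True # concat (map dmsk ds)
          \<and> tc A1 Q (Node s (map fst ds)) (restr_l w) \<and> fc A2 (concat (map snd ds)) (restr_r w))"
      proof
        assume "d = (Leaf, [Node s ts])"
        then show ?thesis using d dmsk_Leaf[of "Node s ts"] by (simp del: deg.simps fc.simps)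
      next
        assume "\<exists>ds. list_all2 (DR S ar) ds ts \<and> d = (Node s (map fst ds), concat (map snd ds))"
        then obtain ds where "list_all2 (DR S ar) ds ts" "d = (Node s (map fst ds), concat (map snd ds))" by blast
        then show ?thesis using d dmsk_Node[of S ar ds ts s] by auto
      qed
    next
      assume "(map isl w = replicate (deg (Node s ts)) False \<and> fc A2 [Node s ts] (restr_r w) \<and> c
        \<and> restr_l w = [])
      \<or> (\<exists>ds. list_all2 (DR S ar) ds ts \<and> map isl w = True # concat (map dmsk ds)
          \<and> tc A1 Q (Node s (map fst ds)) (restr_l w) \<and> fc A2 (concat (map snd ds)) (restr_r w))"
      then show ?R
      proof
        assume h: "map isl w = replicate (deg (Node s ts)) False \<and> fc A2 [Node s ts] (restr_r w) \<and> c
          \<and> restr_l w = []"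
        have "(Leaf, [Node s ts]) \<in> decomps S ar (Node s ts)" using dec by blast
        then show ?R using h dmsk_Leaf[of "Node s ts"] by (intro bexI[of _ "(Leaf, [Node s ts])"]) (auto simp del: deg.simps)
      next
        assume "\<exists>ds. list_all2 (DR S ar) ds ts \<and> map isl w = True # concat (map dmsk ds)
          \<and> tc A1 Q (Node s (map fst ds)) (restr_l w) \<and> fc A2 (concat (map snd ds)) (restr_r w)"
        then show ?R
        proof (elim exE conjE)
          fix ds assume ds: "list_all2 (DR S ar) ds ts" "map isl w = True # concat (map dmsk ds)"
            "tc A1 Q (Node s (map fst ds)) (restr_l w)" "fc A2 (concat (map snd ds)) (restr_r w)"
          have "(Node s (map fst ds), concat (map snd ds)) \<in> decomps S ar (Node s ts)"
            unfolding dec using ds(1) by blast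
          then show ?R using ds dmsk_Node[OF ds(1), of s]
            by (intro bexI[of _ "(Node s (map fst ds), concat (map snd ds))"]) auto
        qed
      qed
    qed
    show "tc ?A P (Node s ts) w \<longleftrightarrow> ?R"
    proof (cases w)
      case Nil
      then show ?thesis unfolding R by auto
    next
      case (Cons x w')
      show ?thesis
      proof (cases x)
        case (Inl a)
        show ?thesis
        proof (cases "a \<in> carrier A1")
          case False
          have n1: "\<not> tc ?A P (Node s ts) w" using Cons Inl False by (simp add: fs_simps)
          have n2: "\<not> (map isl w = replicate (deg (Node s ts)) False \<and> fc A2 [Node s ts] (restr_r w) \<and> c
             \<and> restr_l w = [])" using Cons Inl by simp
          have n3: "\<not> (\<exists>ds. list_all2 (DR S ar) ds ts \<and> map isl w = True # concat (map dmsk ds)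
            \<and> tc A1 Q (Node s (map fst ds)) (restr_l w) \<and> fc A2 (concat (map snd ds)) (restr_r w))"
          proof -
            have key: "\<not> tc A1 Q (Node s ts') (restr_l w)" for ts'
              using Cons Inl False by simp
            show ?thesis using key by blast
          qed
          show ?thesis using n1 n2 n3 R by blast
        next
          case True
          have cl: "tcl ?A (Inl a) 1 ts w' \<longleftrightarrow> (\<exists>ds. list_all2 (DR S ar) ds ts
             \<and> map isl w' = concat (map dmsk ds) \<and> tcl A1 a 1 (map fst ds) (restr_l w')
             \<and> fc A2 (concat (map snd ds)) (restr_r w'))" using CL[of ts] True by blast
          have l: "tc ?A P (Node s ts) w \<longleftrightarrow> Q a \<and> a \<in> Dc A1 s \<and> tcl ?A (Inl a) 1 ts w'"
            using Cons Inl True hQ by (simp add: fs_simps)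
          have tcn: "tc A1 Q (Node s ts') (restr_l w) \<longleftrightarrow> Q a \<and> a \<in> Dc A1 s \<and> tcl A1 a 1 ts' (restr_l w')" for ts'
            using Cons Inl True by simp
          have mi: "map isl w = True # X \<longleftrightarrow> map isl w' = X" for X using Cons Inl by simp
          have rr: "restr_r w = restr_r w'" using Cons Inl by simp
          have r1: "\<not> (map isl w = replicate (deg (Node s ts)) False \<and> fc A2 [Node s ts] (restr_r w) \<and> c
             \<and> restr_l w = [])" using Cons Inl by simp
          have r2: "(\<exists>ds. list_all2 (DR S ar) ds ts \<and> map isl w = True # concat (map dmsk ds)
            \<and> tc A1 Q (Node s (map fst ds)) (restr_l w) \<and> fc A2 (concat (map snd ds)) (restr_r w))
            \<longleftrightarrow> Q a \<and> a \<in> Dc A1 s \<and> (\<exists>ds. list_all2 (DR S ar) ds ts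
             \<and> map isl w' = concat (map dmsk ds) \<and> tcl A1 a 1 (map fst ds) (restr_l w')
             \<and> fc A2 (concat (map snd ds)) (restr_r w'))"
            unfolding tcn mi rr by blast
          have "?R \<longleftrightarrow> Q a \<and> a \<in> Dc A1 s \<and> (\<exists>ds. list_all2 (DR S ar) ds ts
             \<and> map isl w' = concat (map dmsk ds) \<and> tcl A1 a 1 (map fst ds) (restr_l w')
             \<and> fc A2 (concat (map snd ds)) (restr_r w'))" by (rule prop_helper[OF R r1 r2])
          then show ?thesis using l cl by simp
        qed
      next
        case (Inr b)
        have nl: "\<forall>a'. \<not> Ar ?A 1 (Inr b) (Inl a')" by (simp add: fs_simps)
        have ir: "tcl ?A (Inr b) 1 ts w' \<longleftrightarrow> (\<exists>v. w' = map Inr v \<and> tcl A2 b 1 ts v)"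
          using inr_tc(2)[of ?A A1 A2 "Inr b" 1 ts w'] by simp
        show ?thesis
        proof
          assume "tc ?A P (Node s ts) w"
          then have h: "b \<in> carrier A2" "b \<in> Rt A2" "c" "b \<in> Dc A2 s" "tcl ?A (Inr b) 1 ts w'"
            using Cons Inr hc by (auto simp: fs_simps)
          then obtain v where v: "w' = map Inr v" "tcl A2 b 1 ts v" using ir by blast
          have "tc A2 (\<lambda>a. a \<in> Rt A2) (Node s ts) (b # v)" using h v by simp
          moreover have "restr_r w = b # v" using Cons Inr v by simp
          moreover have "restr_l w = []" using Cons Inr v by simp
          moreover have "map isl w = replicate (deg (Node s ts)) False"
          proof -
            have "length v = sum_list (map deg ts)" using tc_length(2)[OF v(2)] .
            then show ?thesis using Cons Inr v by (simp add: comp_def map_replicate_const)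
          qed
          ultimately show ?R unfolding R using h by (simp add: fc_single del: deg.simps fc.simps)
        next
          assume ?R
          then have "map isl w = replicate (deg (Node s ts)) False \<and> fc A2 [Node s ts] (restr_r w) \<and> c"
            unfolding R using Cons Inr by auto
          then have h: "w = map Inr (restr_r w)" "tc A2 (\<lambda>a. a \<in> Rt A2) (Node s ts) (restr_r w)" "c"
            using map_isl_repl fc_single by blast+
          have rr: "restr_r w = b # restr_r w'" using Cons Inr by simp
          have w': "w' = map Inr (restr_r w')" using h(1) Cons Inr by simp
          have "b \<in> carrier A2" "b \<in> Rt A2" "b \<in> Dc A2 s" "tcl A2 b 1 ts (restr_r w')"
            using h(2) rr by auto
          moreover have "tcl ?A (Inr b) 1 ts w'" using ir w' calculation(4) by blast
          ultimately show "tc ?A P (Node s ts) w" using Cons Inr hc h(3) by (auto simp: fs_simps)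
        qed
      qed
    qed
  qed
qed


lemma fcore:
  fixes A1 :: "('s, 'a) fla" and A2 :: "('s, 'b) fla"
  shows "wf_forest S ar f \<Longrightarrow> \<forall>w. fc (fla_sum A1 A2) f w \<longleftrightarrow> (\<exists>ds. list_all2 (DR S ar) ds f
    \<and> map isl w = concat (map dmsk ds) \<and> fc A1 (map fst ds) (restr_l w) \<and> fc A2 (concat (map snd ds)) (restr_r w))"
proof (induction f)
  case Nil
  then show ?case by auto
next
  case (Cons t f)
  let ?A = "fla_sum A1 A2"
  have wt: "wf_tm S ar t" and wf: "wf_forest S ar f" using Cons.prems by (auto simp: wf_forest_def)
  have p1: "\<forall>a. (Inl a \<in> Rt ?A) = (a \<in> Rt A1)" by (simp add: fs_simps)
  have p2: "\<forall>b. (Inr b \<in> Rt ?A) = (b \<in> Rt A2 \<and> True)" by (simp add: fs_simps)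
  have H1: "\<forall>v. tc ?A (\<lambda>a. a \<in> Rt ?A) t v \<longleftrightarrow> (\<exists>d\<in>decomps S ar t. map isl v = dmsk d
          \<and> tc A1 (\<lambda>a. a \<in> Rt A1) (fst d) (restr_l v) \<and> fc A2 (snd d) (restr_r v))"
    using core[OF wt, rule_format, where P="\<lambda>a. a \<in> Rt ?A" and Q="\<lambda>a. a \<in> Rt A1" and c=True,
        OF p1[rule_format] p2[rule_format]] by simp
  have H2: "\<forall>v. fc ?A f v \<longleftrightarrow> (\<exists>ds. list_all2 (DR S ar) ds f
    \<and> map isl v = concat (map dmsk ds) \<and> fc A1 (map fst ds) (restr_l v) \<and> fc A2 (concat (map snd ds)) (restr_r v))"
    using Cons.IH[OF wf] .
  show ?case
  proof
    fix w
    show "fc ?A (t # f) w \<longleftrightarrow> (\<exists>ds. list_all2 (DR S ar) ds (t # f)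
      \<and> map isl w = concat (map dmsk ds) \<and> fc A1 (map fst ds) (restr_l w) \<and> fc A2 (concat (map snd ds)) (restr_r w))"
      unfolding fc.simps(2) list_step[OF H1 H2] ex_la2_Cons
      by (simp add: fc_append conj_assoc)
  qed
qed

fun mrg :: "bool list \<Rightarrow> 'a list \<Rightarrow> 'b list \<Rightarrow> ('a + 'b) list" where
  "mrg [] u v = []"
| "mrg (True # m) u v = Inl (hd u) # mrg m (tl u) v"
| "mrg (False # m) u v = Inr (hd v) # mrg m u (tl v)"

lemma mrg_props: "length (filter id m) = length u \<Longrightarrow> length (filter Not m) = length v \<Longrightarrow>
   map isl (mrg m u v) = m \<and> restr_l (mrg m u v) = u \<and> restr_r (mrg m u v) = v"
proof (induction m arbitrary: u v)
  case (Cons b m)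
  show ?case
  proof (cases b)
    case True
    then obtain a u' where "u = a # u'" using Cons.prems by (cases u) auto
    then show ?thesis using Cons True by auto
  next
    case False
    then obtain c v' where "v = c # v'" using Cons.prems by (cases v) auto
    then show ?thesis using Cons False by auto
  qed
qed auto

lemma mrg_inv: "mrg (map isl w) (restr_l w) (restr_r w) = w"
proof (induction w)
  case (Cons x w)
  then show ?case by (cases x) auto
qed simp

lemma concat_inj:
  "(\<forall>t\<in>set ts. \<forall>d1 d2. d1 \<in> decomps S ar t \<longrightarrow> d2 \<in> decomps S ar t \<longrightarrow> dmsk d1 = dmsk d2 \<longrightarrow> d1 = d2)
   \<Longrightarrow> list_all2 (DR S ar) ds1 ts \<Longrightarrow> list_all2 (DR S ar) ds2 ts \<Longrightarrow> concat (map dmsk ds1) = concat (map dmsk ds2)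
   \<Longrightarrow> ds1 = ds2"
proof (induction ts arbitrary: ds1 ds2)
  case Nil
  then show ?case by simp
next
  case (Cons t ts)
  obtain d1 r1 where 1: "ds1 = d1 # r1" "d1 \<in> decomps S ar t" "list_all2 (DR S ar) r1 ts"
    using Cons.prems(2) by (auto simp: list_all2_Cons2)
  obtain d2 r2 where 2: "ds2 = d2 # r2" "d2 \<in> decomps S ar t" "list_all2 (DR S ar) r2 ts"
    using Cons.prems(3) by (auto simp: list_all2_Cons2)
  have "length (dmsk d1) = length (dmsk d2)" using dmsk_props(1)[OF 1(2)] dmsk_props(1)[OF 2(2)] by simp
  then have e: "dmsk d1 = dmsk d2" "concat (map dmsk r1) = concat (map dmsk r2)"
    using Cons.prems(4) 1 2 by auto
  have h: "\<forall>d1 d2. d1 \<in> decomps S ar t \<longrightarrow> d2 \<in> decomps S ar t \<longrightarrow> dmsk d1 = dmsk d2 \<longrightarrow> d1 = d2"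
    by (rule bspec[OF Cons.prems(1)]) simp
  have "d1 = d2" using h 1(2) 2(2) e(1) by blast
  moreover have "r1 = r2" using Cons.IH[OF _ 1(3) 2(3) e(2)] Cons.prems(1) by auto
  ultimately show ?case using 1 2 by simp
qed

lemma dmsk_inj:
  fixes t :: "'s tm"
  shows "wf_tm S ar t \<Longrightarrow> \<forall>d1 d2. d1 \<in> decomps S ar t \<longrightarrow> d2 \<in> decomps S ar t \<longrightarrow> dmsk d1 = dmsk d2 \<longrightarrow> d1 = d2"
proof (induction t)
  case Leaf
  then show ?case by (simp add: dec_Leaf)
next
  case (Node s ts)
  have ih: "\<forall>t\<in>set ts. \<forall>d1 d2. d1 \<in> decomps S ar t \<longrightarrow> d2 \<in> decomps S ar t \<longrightarrow> dmsk d1 = dmsk d2 \<longrightarrow> d1 = d2"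
    using Node by auto
  show ?case
  proof (intro allI impI)
    fix d1 d2 assume d1: "d1 \<in> decomps S ar (Node s ts)" and d2: "d2 \<in> decomps S ar (Node s ts)"
      and e: "dmsk d1 = dmsk d2"
    have hdL: "dmsk (Leaf, [Node s ts]) = False # replicate (sum_list (map deg ts)) False"
      by (simp add: dmsk_Leaf)
    show "d1 = d2"
    proof (cases "d1 = (Leaf, [Node s ts])")
      case True
      show ?thesis
      proof (cases "d2 = (Leaf, [Node s ts])")
        case True then show ?thesis using \<open>d1 = _\<close> by simp
      next
        case False
        then obtain ds2 where "list_all2 (DR S ar) ds2 ts" "d2 = (Node s (map fst ds2), concat (map snd ds2))"
          using d2 dec_Node[OF Node.prems] by blast
        then have "dmsk d2 = True # concat (map dmsk ds2)" using dmsk_Node[of S ar ds2 ts s] by simp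
        then show ?thesis using e True hdL by simp
      qed
    next
      case False
      then obtain ds1 where ds1: "list_all2 (DR S ar) ds1 ts" "d1 = (Node s (map fst ds1), concat (map snd ds1))"
        using d1 dec_Node[OF Node.prems] by blast
      then have m1: "dmsk d1 = True # concat (map dmsk ds1)" using dmsk_Node[of S ar ds1 ts s] by simp
      show ?thesis
      proof (cases "d2 = (Leaf, [Node s ts])")
        case True then show ?thesis using e m1 hdL by simp
      next
        case False
        then obtain ds2 where ds2: "list_all2 (DR S ar) ds2 ts" "d2 = (Node s (map fst ds2), concat (map snd ds2))"
          using d2 dec_Node[OF Node.prems] by blast
        then have m2: "dmsk d2 = True # concat (map dmsk ds2)" using dmsk_Node[of S ar ds2 ts s] by simp
        have "ds1 = ds2" using concat_inj[OF ih ds1(1) ds2(1)] e m1 m2 by simp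
        then show ?thesis using ds1 ds2 by simp
      qed
    qed
  qed
qed

lemma masks_count:
  "list_all2 (DR S ar) ds f \<Longrightarrow> length (filter id (concat (map dmsk ds))) = fdeg (map fst ds)
    \<and> length (filter Not (concat (map dmsk ds))) = fdeg (concat (map snd ds))
    \<and> length (concat (map dmsk ds)) = fdeg f"
proof (induction ds f rule: list_all2_induct)
  case (Cons d t ds f)
  then show ?case using dmsk_props[OF Cons(1)] by (simp add: id_def)
qed simp

lemma count_eq:
  fixes A1 :: "('s, 'a) fla" and A2 :: "('s, 'b) fla" and f :: "'s forest"
  assumes wf: "wf_forest S ar f"
  shows "card {w. restr_l w = u \<and> restr_r w = v \<and> fc (fla_sum A1 A2) f w}
    = card {ds. list_all2 (DR S ar) ds f \<and> fc A1 (map fst ds) u \<and> fc A2 (concat (map snd ds)) v}"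
proof -
  let ?W = "{w. restr_l w = u \<and> restr_r w = v \<and> fc (fla_sum A1 A2) f w}"
  let ?D = "{ds. list_all2 (DR S ar) ds f \<and> fc A1 (map fst ds) u \<and> fc A2 (concat (map snd ds)) v}"
  define \<Phi> :: "('s tm \<times> 's tm list) list \<Rightarrow> ('a + 'b) list" where "\<Phi> ds = mrg (concat (map dmsk ds)) u v" for ds
  have ihf: "\<forall>t\<in>set f. \<forall>d1 d2. d1 \<in> decomps S ar t \<longrightarrow> d2 \<in> decomps S ar t \<longrightarrow> dmsk d1 = dmsk d2 \<longrightarrow> d1 = d2"
  proof
    fix t assume "t \<in> set f"
    then have "wf_tm S ar t" using wf by (simp add: wf_forest_def)
    then show "\<forall>d1 d2. d1 \<in> decomps S ar t \<longrightarrow> d2 \<in> decomps S ar t \<longrightarrow> dmsk d1 = dmsk d2 \<longrightarrow> d1 = d2"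
      by (rule dmsk_inj)
  qed
  have props: "map isl (\<Phi> ds) = concat (map dmsk ds) \<and> restr_l (\<Phi> ds) = u \<and> restr_r (\<Phi> ds) = v" if "ds \<in> ?D" for ds
  proof -
    have "list_all2 (DR S ar) ds f" "fc A1 (map fst ds) u" "fc A2 (concat (map snd ds)) v" using that by auto
    then have "length (filter id (concat (map dmsk ds))) = length u"
      "length (filter Not (concat (map dmsk ds))) = length v"
      using masks_count fc_length by metis+
    then show ?thesis unfolding \<Phi>_def by (rule mrg_props)
  qed
  have "bij_betw \<Phi> ?D ?W"
  proof (rule bij_betw_imageI)
    show "inj_on \<Phi> ?D"
    proof (rule inj_onI)
      fix ds1 ds2 assume 1: "ds1 \<in> ?D" and 2: "ds2 \<in> ?D" and e: "\<Phi> ds1 = \<Phi> ds2"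
      have "concat (map dmsk ds1) = concat (map dmsk ds2)" using props[OF 1] props[OF 2] e by metis
      then show "ds1 = ds2" using concat_inj[OF ihf] 1 2 by blast
    qed
  next
    show "\<Phi> ` ?D = ?W"
    proof
      show "\<Phi> ` ?D \<subseteq> ?W"
      proof
        fix w assume "w \<in> \<Phi> ` ?D"
        then obtain ds where ds: "ds \<in> ?D" "w = \<Phi> ds" by blast
        have "fc (fla_sum A1 A2) f w" using fcore[OF wf] props[OF ds(1)] ds by auto
        then show "w \<in> ?W" using props[OF ds(1)] ds by auto
      qed
      show "?W \<subseteq> \<Phi> ` ?D"
      proof
        fix w assume w: "w \<in> ?W"
        then obtain ds where ds: "list_all2 (DR S ar) ds f" "map isl w = concat (map dmsk ds)"
          "fc A1 (map fst ds) (restr_l w)" "fc A2 (concat (map snd ds)) (restr_r w)"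
          using fcore[OF wf] by blast
        have "ds \<in> ?D" using ds w by auto
        moreover have "w = \<Phi> ds" using mrg_inv[of w] ds(2) w by (simp add: \<Phi>_def)
        ultimately show "w \<in> \<Phi> ` ?D" by blast
      qed
    qed
  qed
  then show ?thesis by (rule bij_betw_same_card[symmetric])
qed


lemma sum_indicator:
  "finite A \<Longrightarrow> (\<Sum>x\<in>A. if P x then (1::'k::semiring_1) else 0) = of_nat (card {x\<in>A. P x})"
  by (simp add: sum.inter_filter[symmetric])

lemma fc_rd: "fc A (rd f) w \<longleftrightarrow> fc A f w"
proof (induction f arbitrary: w)
  case (Cons t f)
  then show ?case by (cases "t = Leaf") (auto simp: rd_def)
qed (simp add: rd_def)

lemma G_rd: "concat (map (\<lambda>d. rd [fst d]) ds) = rd (map fst ds)"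
  by (induction ds) (auto simp: rd_def)

lemma H_rd: "concat (map (\<lambda>d. rd (snd d)) ds) = rd (concat (map snd ds))"
  by (induction ds) (auto simp: rd_def)

lemma len_restr: "length w = length (restr_l w) + length (restr_r w)"
proof (induction w)
  case (Cons x w)
  then show ?case by (cases x) auto
qed simp

lemma fin_W: "finite {w :: ('a + 'b) list. restr_l w = u \<and> restr_r w = v}"
proof (rule finite_subset)
  show "{w :: ('a + 'b) list. restr_l w = u \<and> restr_r w = v}
      \<subseteq> (\<lambda>m. mrg m u v) ` {m. set m \<subseteq> UNIV \<and> length m = length u + length v}"
  proof
    fix w :: "('a + 'b) list" assume "w \<in> {w. restr_l w = u \<and> restr_r w = v}"
    then have w: "restr_l w = u" "restr_r w = v" by auto
    have "w = mrg (map isl w) u v" using mrg_inv[of w] w by simp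
    moreover have "length (map isl w) = length u + length v" using len_restr[of w] w by simp
    ultimately show "w \<in> (\<lambda>m. mrg m u v) ` {m. set m \<subseteq> UNIV \<and> length m = length u + length v}" by blast
  qed
  show "finite ((\<lambda>m. mrg m u v) ` {m :: bool list. set m \<subseteq> UNIV \<and> length m = length u + length v})"
    by (rule finite_imageI) (rule finite_lists_length_eq, simp)
qed

lemma fin_Dec:
  fixes f :: "'s forest"
  assumes wf: "wf_forest S ar f"
  shows "finite {ds. list_all2 (DR S ar) ds f}"
proof -
  have ihf: "\<forall>t\<in>set f. \<forall>d1 d2. d1 \<in> decomps S ar t \<longrightarrow> d2 \<in> decomps S ar t \<longrightarrow> dmsk d1 = dmsk d2 \<longrightarrow> d1 = d2"
  proof
    fix t assume "t \<in> set f"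
    then have "wf_tm S ar t" using wf by (simp add: wf_forest_def)
    then show "\<forall>d1 d2. d1 \<in> decomps S ar t \<longrightarrow> d2 \<in> decomps S ar t \<longrightarrow> dmsk d1 = dmsk d2 \<longrightarrow> d1 = d2"
      by (rule dmsk_inj)
  qed
  let ?c = "\<lambda>ds. concat (map dmsk ds)"
  have inj: "inj_on ?c {ds. list_all2 (DR S ar) ds f}"
    by (rule inj_onI) (use concat_inj[OF ihf] in blast)
  have "?c ` {ds. list_all2 (DR S ar) ds f} \<subseteq> {m. set m \<subseteq> UNIV \<and> length m = fdeg f}"
    using masks_count by fastforce
  then have "finite (?c ` {ds. list_all2 (DR S ar) ds f})"
    by (rule finite_subset) (rule finite_lists_length_eq, simp)
  then show ?thesis using inj by (rule finite_imageD)
qed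

lemma DB_eq:
  "Delta_basis S ar f p = of_nat (card {ds. list_all2 (DR S ar) ds f \<and>
     (concat (map (\<lambda>d. rd [fst d]) ds), concat (map (\<lambda>d. rd (snd d)) ds)) = p})"
proof -
  obtain g h where p: "p = (g, h)" by (cases p)
  have "{ds. length ds = length f \<and> (\<forall>i<length f. ds ! i \<in> decomps S ar (f ! i))
      \<and> concat (map (\<lambda>d. rd [fst d]) ds) = g \<and> concat (map (\<lambda>d. rd (snd d)) ds) = h}
    = {ds. list_all2 (DR S ar) ds f \<and>
     (concat (map (\<lambda>d. rd [fst d]) ds), concat (map (\<lambda>d. rd (snd d)) ds)) = p}"
    by (auto simp: p list_all2_conv_all_nth)
  then show ?thesis by (simp add: Delta_basis_def p)
qed

lemma part_iii:
  fixes A1 :: "('s, 'a) fla" and A2 :: "('s, 'b) fla" and x :: "'s forest \<Rightarrow> 'k::field_char_0"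
  assumes N: "N_elem S ar x"
  shows "theta (r_map (fla_sum A1 A2) x) = r_tensor A1 A2 (Delta S ar x)"
proof
  fix p :: "'a list \<times> 'b list"
  obtain u v where p: "p = (u, v)" by (cases p)
  let ?A = "fla_sum A1 A2"
  let ?Sx = "{f. x f \<noteq> 0}"
  have fSx: "finite ?Sx" using N by (simp add: N_elem_def)
  have wfx: "wf_forest S ar f" if "f \<in> ?Sx" for f using N that by (simp add: N_elem_def)
  let ?W = "{w :: ('a + 'b) list. restr_l w = u \<and> restr_r w = v}"
  let ?Wf = "\<lambda>f. {w. restr_l w = u \<and> restr_r w = v \<and> fc ?A f w}"
  let ?Dec = "\<lambda>f. {ds. list_all2 (DR S ar) ds f}"
  let ?Df = "\<lambda>f. {ds. list_all2 (DR S ar) ds f \<and> fc A1 (map fst ds) u \<and> fc A2 (concat (map snd ds)) v}"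
  define GH :: "('s tm \<times> 's tm list) list \<Rightarrow> 's forest \<times> 's forest" where
    "GH ds = (concat (map (\<lambda>d. rd [fst d]) ds), concat (map (\<lambda>d. rd (snd d)) ds))" for ds
  define g where "g q = r_basis A1 (fst q) u * (r_basis A2 (snd q) v :: 'k)" for q
  have fW: "finite ?W" by (rule fin_W)
  have L: "theta (r_map ?A x) p = (\<Sum>f\<in>?Sx. x f * of_nat (card (?Wf f)))"
  proof -
    have "theta (r_map ?A x) p = (\<Sum>w\<in>?W. \<Sum>f\<in>?Sx. x f * r_basis ?A f w)"
      by (simp add: theta_def p r_map_def)
    also have "\<dots> = (\<Sum>f\<in>?Sx. \<Sum>w\<in>?W. x f * r_basis ?A f w)" by (rule sum.swap)
    also have "\<dots> = (\<Sum>f\<in>?Sx. x f * of_nat (card (?Wf f)))"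
    proof (rule sum.cong[OF refl])
      fix f
      have "(\<Sum>w\<in>?W. x f * r_basis ?A f w) = x f * (\<Sum>w\<in>?W. if fc ?A f w then 1 else 0)"
        by (simp add: sum_distrib_left r_basis_def compatible_fc)
      also have "\<dots> = x f * of_nat (card {w\<in>?W. fc ?A f w})" by (simp add: sum_indicator[OF fW])
      also have "{w\<in>?W. fc ?A f w} = ?Wf f" by auto
      finally show "(\<Sum>w\<in>?W. x f * r_basis ?A f w) = x f * of_nat (card (?Wf f))" .
    qed
    finally show ?thesis .
  qed
  let ?PP = "\<Union>f\<in>?Sx. GH ` ?Dec f"
  have fPP: "finite ?PP" using fSx fin_Dec wfx by blast
  have DB: "Delta_basis S ar f q = (of_nat (card {ds \<in> ?Dec f. GH ds = q}) :: 'k)" for f q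
    unfolding DB_eq GH_def by simp
  have SD: "{q. Delta S ar x q \<noteq> 0} \<subseteq> ?PP"
  proof
    fix q assume "q \<in> {q. Delta S ar x q \<noteq> 0}"
    then have "(\<Sum>f\<in>?Sx. x f * Delta_basis S ar f q) \<noteq> 0" by (simp add: Delta_def)
    then obtain f where f: "f \<in> ?Sx" "x f * Delta_basis S ar f q \<noteq> 0" by (meson sum.neutral)
    then have "Delta_basis S ar f q \<noteq> (0::'k)" by auto
    then have "card {ds \<in> ?Dec f. GH ds = q} \<noteq> 0" using DB[of f q] by (intro notI) simp
    then have ne: "{ds \<in> ?Dec f. GH ds = q} \<noteq> {}"
    proof (intro notI)
      assume c: "card {ds \<in> ?Dec f. GH ds = q} \<noteq> 0" and e: "{ds \<in> ?Dec f. GH ds = q} = {}"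
      show False using c unfolding e by simp
    qed
    then obtain ds where "ds \<in> ?Dec f" "GH ds = q" by blast
    then show "q \<in> ?PP" using f by blast
  qed
  have perf: "(\<Sum>q\<in>?PP. Delta_basis S ar f q * g q) = of_nat (card (?Df f))" if f: "f \<in> ?Sx" for f
  proof -
    have fD: "finite (?Dec f)" using fin_Dec wfx[OF f] by blast
    have "(\<Sum>q\<in>?PP. Delta_basis S ar f q * g q) = (\<Sum>q\<in>GH ` ?Dec f. Delta_basis S ar f q * g q)"
    proof (rule sum.mono_neutral_right[OF fPP])
      show "GH ` ?Dec f \<subseteq> ?PP" using f by blast
      show "\<forall>q\<in>?PP - GH ` ?Dec f. Delta_basis S ar f q * g q = 0"
      proof
        fix q assume "q \<in> ?PP - GH ` ?Dec f"
        then have e: "{ds \<in> ?Dec f. GH ds = q} = {}" by blast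
        show "Delta_basis S ar f q * g q = 0" unfolding DB e by simp
      qed
    qed
    also have "\<dots> = (\<Sum>q\<in>GH ` ?Dec f. \<Sum>ds\<in>{ds \<in> ?Dec f. GH ds = q}. g (GH ds))"
    proof (rule sum.cong[OF refl])
      fix q
      have "(\<Sum>ds\<in>{ds \<in> ?Dec f. GH ds = q}. g (GH ds)) = (\<Sum>ds\<in>{ds \<in> ?Dec f. GH ds = q}. g q)"
        by (rule sum.cong) auto
      then show "Delta_basis S ar f q * g q = (\<Sum>ds\<in>{ds \<in> ?Dec f. GH ds = q}. g (GH ds))"
        by (simp add: DB)
    qed
    also have "\<dots> = (\<Sum>ds\<in>?Dec f. g (GH ds))"
      by (rule sum.group[OF fD]) (use fD in auto)
    also have "\<dots> = (\<Sum>ds\<in>?Dec f. if fc A1 (map fst ds) u \<and> fc A2 (concat (map snd ds)) v then 1 else 0)"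
      by (rule sum.cong[OF refl]) (simp add: g_def GH_def r_basis_def compatible_fc G_rd H_rd fc_rd)
    also have "\<dots> = of_nat (card {ds \<in> ?Dec f. fc A1 (map fst ds) u \<and> fc A2 (concat (map snd ds)) v})"
      by (rule sum_indicator[OF fD])
    also have "{ds \<in> ?Dec f. fc A1 (map fst ds) u \<and> fc A2 (concat (map snd ds)) v} = ?Df f" by auto
    finally show ?thesis .
  qed
  have R: "r_tensor A1 A2 (Delta S ar x) p = (\<Sum>f\<in>?Sx. x f * of_nat (card (?Df f)))"
  proof -
    have "r_tensor A1 A2 (Delta S ar x) p = (\<Sum>q\<in>{q. Delta S ar x q \<noteq> 0}. Delta S ar x q * g q)"
      by (simp add: r_tensor_def p g_def mult.assoc)
    also have "\<dots> = (\<Sum>q\<in>?PP. Delta S ar x q * g q)"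
      by (rule sum.mono_neutral_left[OF fPP SD]) auto
    also have "\<dots> = (\<Sum>q\<in>?PP. \<Sum>f\<in>?Sx. x f * (Delta_basis S ar f q * g q))"
      by (simp add: Delta_def sum_distrib_right mult.assoc)
    also have "\<dots> = (\<Sum>f\<in>?Sx. \<Sum>q\<in>?PP. x f * (Delta_basis S ar f q * g q))" by (rule sum.swap)
    also have "\<dots> = (\<Sum>f\<in>?Sx. x f * of_nat (card (?Df f)))"
    proof (rule sum.cong[OF refl])
      fix f assume "f \<in> ?Sx"
      then show "(\<Sum>q\<in>?PP. x f * (Delta_basis S ar f q * g q)) = x f * of_nat (card (?Df f))"
        using perf by (simp add: sum_distrib_left[symmetric])
    qed
    finally show ?thesis .
  qed
  have "(\<Sum>f\<in>?Sx. x f * of_nat (card (?Wf f))) = (\<Sum>f\<in>?Sx. x f * of_nat (card (?Df f)))"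
  proof (rule sum.cong[OF refl])
    fix f assume "f \<in> ?Sx"
    then show "x f * of_nat (card (?Wf f)) = x f * of_nat (card (?Df f))"
      using count_eq[OF wfx, of f u v A1 A2] by simp
  qed
  then show "theta (r_map ?A x) p = r_tensor A1 A2 (Delta S ar x) p" using L R by simp
qed



theorem theorem4p8:
  fixes S :: "'s set" and ar :: "'s \<Rightarrow> nat"
  shows
    \<comment> \<open>(i) ++ is associative (up to the canonical bijection of disjoint unions)\<close>
    "(\<forall>(A1 :: ('s, 'a) fla) (A2 :: ('s, 'b) fla) (A3 :: ('s, 'c) fla).
        is_fla S A1 \<and> is_fla S A2 \<and> is_fla S A3 \<longrightarrow>
        fla_map sum_assoc (fla_sum (fla_sum A1 A2) A3) = fla_sum A1 (fla_sum A2 A3))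
     \<and>
    \<comment> \<open>(ii) each r_A is a graded unital algebra morphism N(T(Sigma)) -> K<A>\<close>
     (\<forall>A :: ('s, 'a) fla. is_fla S A \<longrightarrow>
        (\<forall>x :: 's forest \<Rightarrow> 'k::field_char_0. N_elem S ar x \<longrightarrow> kpoly A (r_map A x))
      \<and> r_map A (N_unit :: 's forest \<Rightarrow> 'k) = poly_one
      \<and> (\<forall>x y :: 's forest \<Rightarrow> 'k. N_elem S ar x \<longrightarrow> N_elem S ar y \<longrightarrow>
           r_map A (N_mult x y) = poly_mult (r_map A x) (r_map A y))
      \<and> (\<forall>(x :: 's forest \<Rightarrow> 'k) n. N_elem S ar x \<longrightarrow> N_homog n x \<longrightarrow>
           poly_homog n (r_map A x)))
     \<and>
    \<comment> \<open>(iii) compatibility with the coproduct\<close>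
     (\<forall>(A1 :: ('s, 'a) fla) (A2 :: ('s, 'b) fla) (x :: 's forest \<Rightarrow> 'k).
        is_fla S A1 \<and> is_fla S A2 \<and> N_elem S ar x \<longrightarrow>
        theta (r_map (fla_sum A1 A2) x) = r_tensor A1 A2 (Delta S ar x))
     \<and>
    \<comment> \<open>(iv) r_{A_p(Sigma)} is injective\<close>
     (\<forall>x y :: 's forest \<Rightarrow> 'k. N_elem S ar x \<longrightarrow> N_elem S ar y \<longrightarrow>
        r_map (A_pos S) x = r_map (A_pos S) y \<longrightarrow> x = y)"
proof -
  show ?thesis
    apply (intro conjI)
       apply (intro allI impI, rule part_i)
      apply (intro allI impI, rule part_ii)
     apply (intro allI impI, rule part_iii, blast)
    apply (rule allI, rule allI, rule part_iv)
    done
qed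

end
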